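(* Let $r\ge3$, $\ell\ge1$ and $n\ge 3r-4$ (with $n\ge 2\ell+1$). A semi-valid tuple $C$ of length $2\ell+1$ in $\Omega_n$ satisfies $$|H_n^{(r)}(C)|=\min_{C'}|H_n^{(r)}(C')|,$$ the minimum over all semi-valid tuples $C'$ of length $2\ell+1$ in $\Omega_n$, if and only if there exists $i$ such that $C$ is $(i,2\ell+1)$-consecutive.
   Context: $\Omega_n=\{v_0,\dots,v_{n-1}\}$ with cyclic order $v_0<\dots<v_{n-1}<v_0$, indices of $v$ mod $n$. For distinct vertices $u,w$, $(u,w)$ is the set of vertices strictly between $u$ and $w$ moving clockwise from $u$ to $w$, and $[u,w]=(u,w)\cup\{u,w\}$. A tuple $C=(w_1,\dots,w_{2\ell+1})$ of distinct vertices is semi-valid if $w_1<w_3<\dots<w_{2\ell+1}<w_2<w_4<\dots<w_{2\ell}<w_1$ in clockwise cyclic order; indices of the $w$'s are mod $2\ell+1$. $H_n^{(r)}(C)=\{e\in\binom{\Omega_n}{r}: e\cap[w_p,w_{p-1}]\neq\emptyset\ \forall p\in\{1,\dots,2\ell+1\}\}$. $C$ is $(i,k)$-consecutive if there is $j$ with $w_{i+2s}=v_{j+s}$ for all $0\le s<k$. *)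

theory Defs
  imports Main
begin

text \<open>Vertices of Omega_n are the naturals 0..n-1 (v_i = i, indices mod n).
  A tuple C = (w_1,...,w_m) is a list of length m; w_p = C ! ((p - 1) mod m),
  i.e. 1-based indices taken modulo m.\<close>

definition wi :: "nat list \<Rightarrow> int \<Rightarrow> nat" where
  "wi C p = C ! nat ((p - 1) mod int (length C))"

definition cyc_ordered :: "nat list \<Rightarrow> bool" where
  "cyc_ordered xs \<longleftrightarrow> (\<exists>k. sorted_wrt (<) (rotate k xs))"

definition semi_valid :: "nat \<Rightarrow> nat \<Rightarrow> nat list \<Rightarrow> bool" where
  "semi_valid n l C \<longleftrightarrow> length C = 2*l+1 \<and> distinct C \<and> set C \<subseteq> {0..<n} \<and>
     cyc_ordered (map (\<lambda>s. wi C (2*int s + 1)) [0..<l+1] @ map (\<lambda>s. wi C (2*int s + 2)) [0..<l])"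

text \<open>Closed clockwise interval [u,w] in Omega_n: u, u+1, ..., w (mod n).\<close>
definition cint :: "nat \<Rightarrow> nat \<Rightarrow> nat \<Rightarrow> nat set" where
  "cint n u w = {(u + t) mod n | t. t \<le> (w + n - u) mod n}"

definition H :: "nat \<Rightarrow> nat \<Rightarrow> nat list \<Rightarrow> nat set set" where
  "H n r C = {e. e \<subseteq> {0..<n} \<and> card e = r \<and>
      (\<forall>p\<in>{1..int (length C)}. e \<inter> cint n (wi C p) (wi C (p - 1)) \<noteq> {})}"

definition consecutive :: "nat \<Rightarrow> nat list \<Rightarrow> int \<Rightarrow> nat \<Rightarrow> bool" where
  "consecutive n C i k \<longleftrightarrow> (\<exists>j::nat. \<forall>s<k. wi C (i + 2 * int s) = (j + s) mod n)"

end

theory Submission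
  imports Defs
begin

definition off :: "nat \<Rightarrow> nat \<Rightarrow> nat \<Rightarrow> nat" where
  "off n u w = (w + n - u) mod n"

lemma off_lt: "0 < n \<Longrightarrow> off n u w < n"
  by (simp add: off_def)

lemma off_inv: "u < n \<Longrightarrow> w < n \<Longrightarrow> (u + off n u w) mod n = w"
proof -
  assume a: "u < n" "w < n"
  have "(u + off n u w) mod n = (u + (w + n - u)) mod n"
    unfolding off_def by (simp add: mod_add_right_eq)
  also have "u + (w + n - u) = w + n" using a by simp
  finally show ?thesis using a by simp
qed

lemma off_add: "u < n \<Longrightarrow> t < n \<Longrightarrow> off n u ((u + t) mod n) = t"
proof -
  assume a: "u < n" "t < n"
  show ?thesis
  proof (cases "u + t < n")
    case True
    then have "(u + t) mod n + n - u = t + n" by simp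
    then show ?thesis unfolding off_def using a by simp
  next
    case False
    then have "(u + t) mod n = u + t - n" using a by (simp add: mod_if)
    then have "(u + t) mod n + n - u = t" using False by simp
    then show ?thesis unfolding off_def using a by simp
  qed
qed

lemma off_self: "off n u u = 0"
  by (simp add: off_def)

lemma off_zero_iff: "u < n \<Longrightarrow> w < n \<Longrightarrow> off n u w = 0 \<longleftrightarrow> w = u"
  by (metis add.right_neutral mod_less off_inv off_self)

lemma off_inj: "u < n \<Longrightarrow> w < n \<Longrightarrow> z < n \<Longrightarrow> off n u w = off n u z \<Longrightarrow> w = z"
  by (metis off_inv)

lemma off_trans_le:
  assumes "u < n" "w < n" "z < n" "off n u w \<le> off n u z"
  shows "off n w z = off n u z - off n u w"
proof -
  let ?d = "off n u z - off n u w"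
  have "(w + ?d) mod n = ((u + off n u w) mod n + ?d) mod n" using off_inv assms by simp
  also have "\<dots> = (u + off n u w + ?d) mod n" by (simp add: mod_add_left_eq)
  also have "u + off n u w + ?d = u + off n u z" using assms(4) by simp
  also have "(u + off n u z) mod n = z" using off_inv assms by simp
  finally have "(w + ?d) mod n = z" .
  moreover have "?d < n" using off_lt[of n u z] assms by simp
  ultimately show ?thesis using off_add[of w n ?d] assms by simp
qed

lemma off_trans_gt:
  assumes "u < n" "w < n" "z < n" "off n u w > off n u z"
  shows "off n w z = n - (off n u w - off n u z)"
proof -
  let ?d = "n - (off n u w - off n u z)"
  have lt: "off n u w < n" using off_lt assms by auto
  have "(w + ?d) mod n = ((u + off n u w) mod n + ?d) mod n" using off_inv assms by simp
  also have "\<dots> = (u + off n u w + ?d) mod n" by (simp add: mod_add_left_eq)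
  also have "u + off n u w + ?d = (u + off n u z) + n" using assms(4) lt by simp
  also have "((u + off n u z) + n) mod n = z" using off_inv assms by simp
  finally have "(w + ?d) mod n = z" .
  moreover have "?d < n" using assms(4) lt by linarith
  ultimately show ?thesis using off_add[of w n ?d] assms by simp
qed



definition win :: "nat \<Rightarrow> nat \<Rightarrow> nat \<Rightarrow> nat set" where
  "win n b k = {w. w < n \<and> off n b w < k}"

definition maj :: "nat set \<Rightarrow> nat \<Rightarrow> nat \<Rightarrow> nat \<Rightarrow> bool" where
  "maj W n b k \<longleftrightarrow> card W < 2 * card (win n b k \<inter> W)"

definition cnt :: "nat set \<Rightarrow> nat \<Rightarrow> nat \<Rightarrow> nat" where
  "cnt W n k = card {b. b < n \<and> maj W n b k}"

definition arc :: "nat \<Rightarrow> nat \<Rightarrow> nat set \<Rightarrow> bool" where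
  "arc n m W \<longleftrightarrow> (\<exists>j. W = {(j + s) mod n | s. s < m})"

lemma win_sub_image: "b < n \<Longrightarrow> win n b k \<subseteq> (\<lambda>t. (b + t) mod n) ` {..<k}"
proof
  fix w assume "b < n" "w \<in> win n b k"
  then have "w < n" "off n b w < k" by (auto simp: win_def)
  then show "w \<in> (\<lambda>t. (b + t) mod n) ` {..<k}"
    using off_inv[OF \<open>b < n\<close> \<open>w < n\<close>] by (intro image_eqI[of _ _ "off n b w"]) auto
qed

lemma win_image: "b < n \<Longrightarrow> k \<le> n \<Longrightarrow> win n b k = (\<lambda>t. (b + t) mod n) ` {..<k}"
proof
  assume a: "b < n" "k \<le> n"
  show "win n b k \<subseteq> (\<lambda>t. (b + t) mod n) ` {..<k}" using win_sub_image a by simp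
  show "(\<lambda>t. (b + t) mod n) ` {..<k} \<subseteq> win n b k"
  proof
    fix w assume "w \<in> (\<lambda>t. (b + t) mod n) ` {..<k}"
    then obtain t where t: "t < k" "w = (b + t) mod n" by auto
    then have "off n b w = t" using off_add[of b n t] a by simp
    then show "w \<in> win n b k" using t a by (auto simp: win_def)
  qed
qed

lemma card_win: "b < n \<Longrightarrow> k \<le> n \<Longrightarrow> card (win n b k) = k"
proof -
  assume a: "b < n" "k \<le> n"
  have "inj_on (\<lambda>t. (b + t) mod n) {..<k}"
  proof (rule inj_onI)
    fix x y assume "x \<in> {..<k}" "y \<in> {..<k}" "(b + x) mod n = (b + y) mod n"
    then have "x < n" "y < n" and e: "(b + x) mod n = (b + y) mod n" using a by auto
    have "off n b ((b + x) mod n) = x" using off_add[of b n x] a \<open>x < n\<close> by blast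
    moreover have "off n b ((b + y) mod n) = y" using off_add[of b n y] a \<open>y < n\<close> by blast
    ultimately show "x = y" using e by metis
  qed
  then show ?thesis using win_image[OF a] by (simp add: card_image)
qed

lemma card_win_le: "b < n \<Longrightarrow> card (win n b k) \<le> k"
proof -
  assume b: "b < n"
  have "card (win n b k) \<le> card ((\<lambda>t. (b + t) mod n) ` {..<k})"
    using win_sub_image[OF b] by (intro card_mono) auto
  also have "\<dots> \<le> card {..<k}" by (rule card_image_le) simp
  finally show ?thesis by simp
qed

lemma finite_win: "finite (win n b k)"
  unfolding win_def by (rule finite_subset[of _ "{..<n}"]) auto

lemma maj_common:
  assumes "finite W" "maj W n b k" "maj W n b' k"
  shows "\<exists>w\<in>W. w \<in> win n b k \<and> w \<in> win n b' k"
proof (rule ccontr)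
  assume "\<not> ?thesis"
  then have d: "(win n b k \<inter> W) \<inter> (win n b' k \<inter> W) = {}" by auto
  have "card ((win n b k \<inter> W) \<union> (win n b' k \<inter> W)) = card (win n b k \<inter> W) + card (win n b' k \<inter> W)"
    using d assms(1) by (simp add: card_Un_disjoint)
  moreover have "card ((win n b k \<inter> W) \<union> (win n b' k \<inter> W)) \<le> card W"
    using assms(1) by (intro card_mono) auto
  ultimately show False using assms(2,3) unfolding maj_def by linarith
qed

lemma close_of_common:
  assumes "b < n" "b' < n" "w < n" "off n b w < k" "off n b' w < k"
  shows "off n b' b < k \<or> n - k < off n b' b"
proof (cases "off n b' b \<le> off n b' w")
  case True
  then show ?thesis using assms by linarith
next
  case False
  then have "off n b w = n - (off n b' b - off n b' w)"
    using off_trans_gt[of b' n b w] assms by simp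
  moreover have "off n b' b < n" using assms by (simp add: off_lt)
  ultimately show ?thesis using assms False by linarith
qed

lemma maj_close:
  assumes "finite W" "W \<subseteq> {..<n}" "b < n" "b' < n" "maj W n b k" "maj W n b' k"
  shows "off n b' b < k \<or> n - k < off n b' b"
proof -
  obtain w where "w \<in> W" "w \<in> win n b k" "w \<in> win n b' k" using maj_common assms by blast
  then show ?thesis using close_of_common[of b n b' w k] assms by (auto simp: win_def)
qed

lemma close_card:
  assumes X: "X \<subseteq> {..<n}" and k: "2 * k \<le> n"
    and cl: "\<And>x y. x \<in> X \<Longrightarrow> y \<in> X \<Longrightarrow> off n x y < k \<or> n - k < off n x y"
  shows "card X \<le> k"
proof (cases "X = {}")
  case True then show ?thesis by simp
next
  case False
  then obtain s where s: "s \<in> X" by auto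
  have sn: "s < n" using s X by auto
  define \<phi> where "\<phi> y = (if off n s y < k then off n s y else off n s y + k - n)" for y
  have im: "\<phi> ` X \<subseteq> {..<k}"
  proof
    fix z assume "z \<in> \<phi> ` X"
    then obtain y where y: "y \<in> X" "z = \<phi> y" by auto
    have "off n s y < n" using sn by (simp add: off_lt)
    then show "z \<in> {..<k}" using y cl[OF s y(1)] unfolding \<phi>_def by auto
  qed
  have inj: "inj_on \<phi> X"
  proof (rule inj_onI)
    fix y y' assume y: "y \<in> X" and y': "y' \<in> X" and eq: "\<phi> y = \<phi> y'"
    have yn: "y < n" and y'n: "y' < n" using y y' X by auto
    have o1: "off n s y < n" and o2: "off n s y' < n" using sn by (auto simp: off_lt)
    have c1: "off n s y < k \<or> n - k < off n s y" using cl[OF s y] .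
    have c2: "off n s y' < k \<or> n - k < off n s y'" using cl[OF s y'] .
    show "y = y'"
    proof (cases "off n s y < k")
      case A: True
      show ?thesis
      proof (cases "off n s y' < k")
        case True
        then show ?thesis using A eq off_inj[OF sn yn y'n] unfolding \<phi>_def by simp
      next
        case False
        then have e: "off n s y = off n s y' + k - n" using A eq unfolding \<phi>_def by simp
        have gt: "n - k < off n s y'" using c2 False by simp
        then have "off n s y' > off n s y" using e k o2 by linarith
        then have "off n y' y = n - (off n s y' - off n s y)"
          using off_trans_gt[OF sn y'n yn] by simp
        then have "off n y' y = k" using e gt o2 k by linarith
        then show ?thesis using cl[OF y' y] k by linarith
      qed
    next
      case B: False
      show ?thesis
      proof (cases "off n s y' < k")
        case True
        then have e: "off n s y' = off n s y + k - n" using B eq unfolding \<phi>_def by simp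
        have gt: "n - k < off n s y" using c1 B by simp
        then have "off n s y > off n s y'" using e k o1 by linarith
        then have "off n y y' = n - (off n s y - off n s y')"
          using off_trans_gt[OF sn yn y'n] by simp
        then have "off n y y' = k" using e gt o1 k by linarith
        then show ?thesis using cl[OF y y'] k by linarith
      next
        case False
        then have "off n s y = off n s y'" using B eq c1 c2 o1 o2 k unfolding \<phi>_def by auto
        then show ?thesis using off_inj[OF sn yn y'n] by simp
      qed
    qed
  qed
  have "card X = card (\<phi> ` X)" using inj by (simp add: card_image)
  also have "\<dots> \<le> card {..<k}" using im by (intro card_mono) auto
  finally show ?thesis by simp
qed

lemma cnt_le:
  assumes "finite W" "W \<subseteq> {..<n}" "2 * k \<le> n"
  shows "cnt W n k \<le> k"
  unfolding cnt_def
proof (rule close_card)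
  show "{b. b < n \<and> maj W n b k} \<subseteq> {..<n}" by auto
  show "2 * k \<le> n" by fact
  fix x y assume "x \<in> {b. b < n \<and> maj W n b k}" "y \<in> {b. b < n \<and> maj W n b k}"
  then show "off n x y < k \<or> n - k < off n x y"
    using maj_close[OF assms(1,2), of y x k] by simp
qed

lemma cnt_small:
  assumes "card W = 2*l+1" "k \<le> l"
  shows "cnt W n k = 0"
proof -
  have "\<not> maj W n b k" if "b < n" for b
  proof -
    have "card (win n b k \<inter> W) \<le> k"
      using card_win_le[OF that, of k] card_mono[OF finite_win Int_lower1] by (meson le_trans)
    then show ?thesis using assms unfolding maj_def by linarith
  qed
  then show ?thesis unfolding cnt_def by simp
qed



lemma mod_add_cancel_nat:
  fixes x y n k :: nat
  assumes "x < n" "y < n" "(x + k) mod n = (y + k) mod n"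
  shows "x = y"
proof -
  have n: "0 < n" using assms by simp
  have "(x + k mod n) mod n = (y + k mod n) mod n" using assms(3) by (simp add: mod_add_right_eq)
  moreover have "k mod n < n" using n by simp
  ultimately show ?thesis using off_add[of x n "k mod n"] off_add[of y n "k mod n"] assms
    by (metis add.commute off_add mod_add_left_eq) 
qed

lemma win_split:
  assumes "b < n" "k \<le> n" "w < n"
  shows "w \<in> win n b k \<longleftrightarrow> w \<notin> win n ((b + k) mod n) (n - k)"
proof (cases "k = n")
  case True
  then show ?thesis using assms off_lt[of n b w] by (auto simp: win_def)
next
  case False
  then have kn: "k < n" using assms by simp
  define b' where "b' = (b + k) mod n"
  have b'n: "b' < n" using assms b'_def by simp
  have ob: "off n b b' = k" using off_add[of b n k] assms kn b'_def by simp
  show ?thesis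
  proof (cases "k \<le> off n b w")
    case True
    then have "off n b' w = off n b w - k" using off_trans_le[of b n b' w] assms b'n ob by simp
    moreover have "off n b w < n" using assms by (simp add: off_lt)
    ultimately show ?thesis using True assms unfolding win_def b'_def[symmetric] by auto
  next
    case False
    then have "off n b' w = n - (k - off n b w)" using off_trans_gt[of b n b' w] assms b'n ob by simp
    then show ?thesis using False assms unfolding win_def b'_def[symmetric] by auto
  qed
qed

lemma maj_sym:
  assumes W: "finite W" "W \<subseteq> {..<n}" "card W = 2*l+1" and b: "b < n" "k \<le> n"
  shows "maj W n b k \<longleftrightarrow> \<not> maj W n ((b + k) mod n) (n - k)"
proof -
  let ?A = "win n b k \<inter> W" and ?B = "win n ((b + k) mod n) (n - k) \<inter> W"
  have "?A \<inter> ?B = {}" using win_split[OF b] W by auto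
  moreover have "?A \<union> ?B = W" using win_split[OF b] W by auto
  ultimately have "card ?A + card ?B = card W" using W(1)
    by (metis card_Un_disjoint finite_Int)
  then show ?thesis using W(3) unfolding maj_def by presburger
qed

lemma cnt_sym:
  assumes W: "finite W" "W \<subseteq> {..<n}" "card W = 2*l+1" and k: "k \<le> n"
  shows "cnt W n k + cnt W n (n - k) = n"
proof -
  define g where "g b = (b + k) mod n" for b
  have "card W \<le> n" using card_mono[of "{..<n}" W] W by simp
  then have n: "0 < n" using W by simp
  have eq: "{b. b < n \<and> maj W n b (n - k)} = g ` {b. b < n \<and> \<not> maj W n b k}"
  proof
    show "g ` {b. b < n \<and> \<not> maj W n b k} \<subseteq> {b. b < n \<and> maj W n b (n - k)}"
      using maj_sym[OF W _ k] n unfolding g_def by auto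
  next
    show "{b. b < n \<and> maj W n b (n - k)} \<subseteq> g ` {b. b < n \<and> \<not> maj W n b k}"
    proof
      fix b' assume b': "b' \<in> {b. b < n \<and> maj W n b (n - k)}"
      define b where "b = (b' + (n - k)) mod n"
      have "g b = (b' + (n - k) + k) mod n" unfolding g_def b_def by (simp add: mod_add_left_eq)
      also have "\<dots> = b'" using b' k by simp
      finally have gb: "g b = b'" .
      have bn: "b < n" using n b_def by simp
      then have "\<not> maj W n b k" using maj_sym[OF W bn k] gb b' unfolding g_def by simp
      then show "b' \<in> g ` {b. b < n \<and> \<not> maj W n b k}" using gb bn by blast
    qed
  qed
  have inj: "inj_on g {b. b < n \<and> \<not> maj W n b k}"
    by (rule inj_onI) (use mod_add_cancel_nat in \<open>auto simp: g_def\<close>)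
  have "cnt W n (n - k) = card {b. b < n \<and> \<not> maj W n b k}"
    unfolding cnt_def eq using inj by (simp add: card_image)
  moreover have "card {b. b < n \<and> \<not> maj W n b k} + cnt W n k = n"
  proof -
    have "{b. b < n \<and> \<not> maj W n b k} \<union> {b. b < n \<and> maj W n b k} = {..<n}" by auto
    moreover have "{b. b < n \<and> \<not> maj W n b k} \<inter> {b. b < n \<and> maj W n b k} = {}" by auto
    ultimately show ?thesis unfolding cnt_def
      by (metis card_Un_disjoint card_lessThan finite_Collect_conjI finite_Collect_less_nat)
  qed
  ultimately show ?thesis by linarith
qed



lemma card_arc:
  assumes "m \<le> n"
  shows "card {(j + s) mod n | s. s < m} = m"
proof -
  have e: "{(j + s) mod n | s. s < m} = (\<lambda>s. (j + s) mod n) ` {..<m}" by auto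
  have "inj_on (\<lambda>s. (j + s) mod n) {..<m}"
  proof (rule inj_onI)
    fix x y assume "x \<in> {..<m}" "y \<in> {..<m}" "(j + x) mod n = (j + y) mod n"
    then show "x = y" using mod_add_cancel_nat[of x n y j] assms by (simp add: add.commute)
  qed
  then show ?thesis unfolding e by (simp add: card_image)
qed

lemma cnt_arc_ge:
  assumes m: "m = 2*l+1" "m \<le> n" and k: "l+1 \<le> k" "k \<le> n"
    and B: "B = {(j + s) mod n | s. s < m}"
  shows "k \<le> cnt B n k"
proof -
  have n: "0 < n" using m by simp
  define c where "c = (j + l + 1 + (n - k)) mod n"
  define bi where "bi i = (c + i) mod n" for i
  have cardB: "card B = m" using card_arc[OF m(2)] B by simp
  have finB: "finite B" using B by simp
  have maji: "maj B n (bi i) k" if i: "i < k" for i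
  proof -
    define lo where "lo = (if i \<le> l then i else l)"
    define P where "P = (\<lambda>s. (j + s) mod n) ` {lo..lo+l}"
    have bin: "bi i < n" using n bi_def by simp
    have PB: "P \<subseteq> B" unfolding P_def B lo_def using m by auto
    have Pw: "P \<subseteq> win n (bi i) k"
    proof
      fix p assume "p \<in> P"
      then obtain s where s: "lo \<le> s" "s \<le> lo + l" "p = (j + s) mod n" unfolding P_def by auto
      define t where "t = s + k - (l + 1 + i)"
      have t1: "l + 1 + i \<le> s + k" using s k i unfolding lo_def by (auto split: if_splits)
      have tk: "t < k" using s t1 unfolding t_def lo_def by (auto split: if_splits)
      have "(bi i + t) mod n = (j + l + 1 + (n - k) + i + t) mod n"
        unfolding bi_def c_def by (simp add: mod_add_left_eq)
      also have "j + l + 1 + (n - k) + i + t = (j + s) + n" using t1 k unfolding t_def by simp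
      also have "((j + s) + n) mod n = p" using s by simp
      finally have "(bi i + t) mod n = p" .
      then have "off n (bi i) p = t" using off_add[OF bin, of t] tk k by simp
      then show "p \<in> win n (bi i) k" using tk s n unfolding win_def by simp
    qed
    have "card P = l + 1"
    proof -
      have "inj_on (\<lambda>s. (j + s) mod n) {lo..lo+l}"
      proof (rule inj_onI)
        fix x y assume "x \<in> {lo..lo+l}" "y \<in> {lo..lo+l}" "(j + x) mod n = (j + y) mod n"
        moreover have "lo + l < n" using m unfolding lo_def by auto
        ultimately show "x = y" using mod_add_cancel_nat[of x n y j] by (simp add: add.commute)
      qed
      then show ?thesis unfolding P_def by (simp add: card_image)
    qed
    moreover have "card P \<le> card (win n (bi i) k \<inter> B)"
      using PB Pw finB by (intro card_mono) auto
    ultimately show ?thesis unfolding maj_def using cardB m by linarith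
  qed
  have inj: "inj_on bi {..<k}"
  proof (rule inj_onI)
    fix x y assume "x \<in> {..<k}" "y \<in> {..<k}" "bi x = bi y"
    then show "x = y" using mod_add_cancel_nat[of x n y c] k unfolding bi_def by (simp add: add.commute)
  qed
  have "bi ` {..<k} \<subseteq> {b. b < n \<and> maj B n b k}" using maji n unfolding bi_def by auto
  then have "card (bi ` {..<k}) \<le> cnt B n k" unfolding cnt_def by (intro card_mono) auto
  then show ?thesis using inj by (simp add: card_image)
qed

lemma maj_iff_sub:
  assumes "finite W" "card W = 2*l+1" "b < n" "l + 1 \<le> n"
  shows "maj W n b (l+1) \<longleftrightarrow> win n b (l+1) \<subseteq> W"
proof -
  have cw: "card (win n b (l+1)) = l+1" using card_win assms by simp
  have le: "card (win n b (l+1) \<inter> W) \<le> l+1"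
    using cw card_mono[OF finite_win, of "win n b (l+1) \<inter> W" n b "l+1"] by auto
  show ?thesis
  proof
    assume "maj W n b (l+1)"
    then have "card (win n b (l+1) \<inter> W) = card (win n b (l+1))" using le cw assms unfolding maj_def by linarith
    then have "win n b (l+1) \<inter> W = win n b (l+1)" using finite_win
      by (metis card_subset_eq inf_le1)
    then show "win n b (l+1) \<subseteq> W" by blast
  next
    assume "win n b (l+1) \<subseteq> W"
    then have "win n b (l+1) \<inter> W = win n b (l+1)" by blast
    then show "maj W n b (l+1)" using cw assms unfolding maj_def by simp
  qed
qed

lemma arc_of_cnt:
  assumes W: "finite W" "W \<subseteq> {..<n}" "card W = 2*l+1" and l: "1 \<le> l"
    and c: "l+1 \<le> cnt W n (l+1)"
  shows "arc n (2*l+1) W"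
proof -
  define k where "k = l + 1"
  define m where "m = 2*l+1"
  define X where "X = {b. b < n \<and> maj W n b k}"
  have mn: "m \<le> n" using card_mono[of "{..<n}" W] W unfolding m_def by simp
  then have n3: "3 \<le> n" using l unfolding m_def by simp
  have kn: "k \<le> n" using mn unfolding k_def m_def by simp
  have Xs: "b \<in> X \<longleftrightarrow> b < n \<and> win n b k \<subseteq> W" for b
    unfolding X_def k_def using maj_iff_sub[OF W(1,3), of _ n] kn k_def by auto
  have cX: "k \<le> card X" using c unfolding X_def cnt_def k_def by simp
  have finX: "finite X" unfolding X_def by simp
  show ?thesis
  proof (cases "\<forall>s\<in>X. (s + (n - 1)) mod n \<in> X")
    case True
    have "X \<noteq> {}" using cX k_def by auto
    then obtain x0 where x0: "x0 \<in> X" by blast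
    have x0n: "x0 < n" using x0 Xs by simp
    have all: "(x0 + n - t) mod n \<in> X" if "t \<le> n" for t
      using that
    proof (induction t)
      case 0
      then show ?case using x0 x0n by simp
    next
      case (Suc t)
      then have "((x0 + n - t) mod n + (n - 1)) mod n \<in> X" using True by simp
      moreover have "((x0 + n - t) mod n + (n - 1)) mod n = (x0 + n - t + (n - 1)) mod n"
        by (simp add: mod_add_left_eq)
      moreover have "x0 + n - t + (n - 1) = x0 + n - Suc t + n" using Suc.prems n3 by simp
      ultimately show ?case by simp
    qed
    have allX: "y \<in> X" if "y < n" for y
    proof -
      define t where "t = (x0 + n - y) mod n"
      have "(x0 + n - t) mod n = y"
        using that x0n unfolding t_def by (cases "y \<le> x0") (auto simp: mod_if)
      moreover have "t \<le> n" unfolding t_def using n3 by simp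
      ultimately show ?thesis using all by metis
    qed
    have "W = {..<n}"
    proof
      show "W \<subseteq> {..<n}" by fact
      show "{..<n} \<subseteq> W"
      proof
        fix y assume "y \<in> {..<n}"
        then have "y < n" by simp
        then have "win n y k \<subseteq> W" using allX Xs by blast
        moreover have "y \<in> win n y k" using \<open>y < n\<close> unfolding win_def k_def by (simp add: off_self)
        ultimately show "y \<in> W" by blast
      qed
    qed
    then have "n = m" using W unfolding m_def by simp
    then have "W = {(0 + s) mod n | s. s < m}" using \<open>W = {..<n}\<close> by (auto, rule_tac x=x in exI, simp)
    then show ?thesis unfolding arc_def m_def by blast
  next
    case False
    then obtain s where s: "s \<in> X" and s'X: "(s + (n - 1)) mod n \<notin> X" by blast
    define s' where "s' = (s + (n - 1)) mod n"
    have sn: "s < n" using s Xs by simp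
    have s'n: "s' < n" unfolding s'_def using n3 by simp
    have wsW: "win n s k \<subseteq> W" using s Xs by simp
    have oss': "off n s s' = n - 1" unfolding s'_def using off_add[OF sn, of "n - 1"] n3 by simp
    have "(s' + 1) mod n = (s + (n - 1) + 1) mod n" unfolding s'_def by (metis mod_add_left_eq)
    also have "s + (n - 1) + 1 = s + n" using n3 by simp
    finally have "(s' + 1) mod n = s" using sn by simp
    then have os's: "off n s' s = 1" using off_add[OF s'n, of 1] n3 by simp
    have s'W: "s' \<notin> W"
    proof
      assume s'W: "s' \<in> W"
      have "\<not> win n s' k \<subseteq> W" using s'X Xs s'n unfolding s'_def by blast
      then obtain w where w: "w \<in> win n s' k" "w \<notin> W" by blast
      have wn: "w < n" and ow: "off n s' w < k" using w unfolding win_def by auto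
      show False
      proof (cases "off n s' w = 0")
        case True
        then have "w = s'" using off_zero_iff[OF s'n wn] by simp
        then show False using w s'W by simp
      next
        case False
        then have "off n s' s \<le> off n s' w" using os's by simp
        then have "off n s w = off n s' w - 1" using off_trans_le[OF s'n sn wn] os's by simp
        then have "w \<in> win n s k" using ow wn False unfolding win_def by simp
        then show False using wsW w by blast
      qed
    qed
    have XW: "X \<subseteq> win n s k"
    proof
      fix y assume y: "y \<in> X"
      have yn: "y < n" using y Xs by simp
      have "off n s y < k \<or> n - k < off n s y"
        using maj_close[OF W(1,2) yn sn] y s unfolding X_def by auto
      moreover have "\<not> n - k < off n s y"
      proof
        assume a: "n - k < off n s y"
        have "off n s y \<le> off n s s'" using oss' off_lt[of n s y] n3 by simp
        then have "off n y s' = off n s s' - off n s y" using off_trans_le[OF sn yn s'n] by simp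
        then have "off n y s' < k" using a oss' unfolding k_def by linarith
        then have "s' \<in> win n y k" using s'n unfolding win_def by simp
        moreover have "win n y k \<subseteq> W" using y Xs by simp
        ultimately show False using s'W by blast
      qed
      ultimately show "y \<in> win n s k" using yn unfolding win_def by simp
    qed
    have Xeq: "X = win n s k"
      using card_subset_eq[OF finite_win XW] cX card_win[OF sn kn]
      by (metis XW card_mono finite_win le_antisym)
    have inW: "(s + t) mod n \<in> W" if t: "t < m" for t
    proof -
      define t1 where "t1 = min t l"
      define t2 where "t2 = t - t1"
      have t1k: "t1 < k" and t2k: "t2 < k" using t unfolding t1_def t2_def k_def m_def by auto
      define b where "b = (s + t1) mod n"
      have bn: "b < n" unfolding b_def using n3 by simp
      have "off n s b = t1" unfolding b_def using off_add[OF sn, of t1] t1k kn by simp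
      then have "b \<in> X" using Xeq bn t1k unfolding win_def by simp
      then have wb: "win n b k \<subseteq> W" using Xs by simp
      have "(b + t2) mod n = (s + t1 + t2) mod n"
        unfolding b_def by (simp add: mod_add_left_eq)
      moreover have "s + t1 + t2 = s + t" unfolding t1_def t2_def by simp
      ultimately have "(b + t2) mod n = (s + t) mod n" by simp
      then have "off n b ((s + t) mod n) = t2" using off_add[OF bn, of t2] t2k kn by simp
      then have "(s + t) mod n \<in> win n b k" using t2k n3 unfolding win_def by simp
      then show ?thesis using wb by blast
    qed
    have AW: "{(s + t) mod n | t. t < m} \<subseteq> W" using inW by blast
    have "{(s + t) mod n | t. t < m} = W"
      using card_subset_eq[OF W(1) AW] card_arc[OF mn] W(3) unfolding m_def by simp
    then show ?thesis unfolding arc_def m_def by metis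
  qed
qed



lemma downclosed_card:
  fixes P :: "nat set"
  assumes "P \<subseteq> {..<m}" "\<And>s t. t \<in> P \<Longrightarrow> s < t \<Longrightarrow> s \<in> P"
  shows "s \<in> P \<longleftrightarrow> s < card P"
proof
  assume s: "s \<in> P"
  have "{..s} \<subseteq> P" using assms(2)[OF s] s by (auto simp: le_less)
  then have "card {..s} \<le> card P" using assms(1) by (intro card_mono) (auto intro: finite_subset)
  then show "s < card P" by simp
next
  assume s: "s < card P"
  show "s \<in> P"
  proof (rule ccontr)
    assume "s \<notin> P"
    have "P \<subseteq> {..<s}"
    proof
      fix t assume "t \<in> P"
      then show "t \<in> {..<s}" using assms(2)[of t s] \<open>s \<notin> P\<close> by (cases "t = s"; cases "s < t") auto
    qed
    then have "card P \<le> s" using card_mono[of "{..<s}" P] by simp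
    then show False using s by simp
  qed
qed

lemma cyc_incr:
  fixes v :: "nat \<Rightarrow> nat"
  assumes mono: "\<And>s t. s < t \<Longrightarrow> t < m \<Longrightarrow> v s < v t" and vn: "\<And>s. s < m \<Longrightarrow> v s < n"
    and c: "c \<le> n" and q: "q = card {s. s < m \<and> v s + c < n}"
    and st: "s < t" "t < m"
  shows "(v ((q+s) mod m) + c) mod n < (v ((q+t) mod m) + c) mod n"
proof -
  let ?P = "{s. s < m \<and> v s + c < n}"
  have P: "i \<in> ?P \<longleftrightarrow> i < q" for i
    unfolding q
  proof (rule downclosed_card[of _ m])
    show "?P \<subseteq> {..<m}" by auto
    fix s t assume "t \<in> ?P" "s < t"
    then show "s \<in> ?P" using mono[of s t] by auto
  qed
  have qm: "q \<le> m" unfolding q using card_mono[of "{..<m}" ?P] by auto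
  have val: "(v i + c) mod n = (if i < q then v i + c else v i + c - n)" if "i < m" for i
  proof (cases "i < q")
    case True
    then have "v i + c < n" using P[of i] by simp
    then show ?thesis using True by simp
  next
    case False
    then have "\<not> v i + c < n" using P[of i] that by simp
    moreover have "v i + c < 2 * n" using vn[OF that] c by simp
    ultimately show ?thesis using False by (simp add: mod_if)
  qed
  show ?thesis
  proof (cases "q + t < m")
    case True
    then have "(q+s) mod m = q + s" "(q+t) mod m = q + t" using st by auto
    moreover have "\<not> v (q+s) + c < n" using P[of "q+s"] True st by simp
    ultimately show ?thesis using val[of "q+s"] val[of "q+t"] True st mono[of "q+s" "q+t"]
      vn[of "q+s"] c by simp
  next
    case F1: False
    show ?thesis
    proof (cases "q + s < m")
      case True
      then have a: "(q+s) mod m = q + s" by simp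
      have b: "(q+t) mod m = q + t - m" using F1 st qm by (simp add: mod_if)
      have "q + t - m < q" using st F1 by linarith
      moreover have "\<not> v (q+s) + c < n" using P[of "q+s"] True st by simp
      ultimately show ?thesis using a b val[of "q+s"] val[of "q+t-m"] True st
        vn[of "q+s"] c by simp
    next
      case False
      then have a: "(q+s) mod m = q + s - m" "(q+t) mod m = q + t - m" using F1 st qm by (auto simp: mod_if)
      have "q + t - m < q" using st F1 by linarith
      moreover have "q + s - m < q + t - m" using st False by simp
      moreover have "q + t - m < m" "q + s - m < m" using qm st by linarith+
      ultimately show ?thesis using a val[of "q+s-m"] val[of "q+t-m"] st mono[of "q+s-m" "q+t-m"] by simp
    qed
  qed
qed

lemma nat_mod_add_int:
  fixes X :: int and m :: nat
  assumes "0 < m"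
  shows "nat ((X + int s) mod int m) = (nat (X mod int m) + s) mod m"
proof -
  have "int (nat ((X + int s) mod int m)) = (X + int s) mod int m" using assms by simp
  moreover have "int ((nat (X mod int m) + s) mod m) = (X mod int m + int s) mod int m"
    using assms by (simp add: of_nat_mod)
  moreover have "(X mod int m + int s) mod int m = (X + int s) mod int m" by (simp add: mod_add_left_eq)
  ultimately show ?thesis by (metis of_nat_eq_iff)
qed


lemma L_nth:
  assumes len: "length C = 2*l+1" and s: "s < 2*l+1"
  shows "(map (\<lambda>s. wi C (2*int s + 1)) [0..<l+1] @ map (\<lambda>s. wi C (2*int s + 2)) [0..<l]) ! s
         = C ! ((2*s) mod (2*l+1))"
proof (cases "s < l + 1")
  case True
  then have "(map (\<lambda>s. wi C (2*int s + 1)) [0..<l+1] @ map (\<lambda>s. wi C (2*int s + 2)) [0..<l]) ! s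
      = wi C (2*int s + 1)" by (simp add: nth_append_left del: upt_Suc)
  also have "\<dots> = C ! nat ((2 * int s) mod int (2*l+1))" unfolding wi_def len by simp
  also have "nat ((2 * int s) mod int (2*l+1)) = 2 * s" using True by simp
  also have "2 * s = (2*s) mod (2*l+1)" using True by simp
  finally show ?thesis .
next
  case False
  then have "(map (\<lambda>s. wi C (2*int s + 1)) [0..<l+1] @ map (\<lambda>s. wi C (2*int s + 2)) [0..<l]) ! s
      = wi C (2*int (s - (l+1)) + 2)"
  proof -
    have "s - Suc l < l" using s False by simp
    then show ?thesis using s False by (simp add: nth_append_right del: upt_Suc)
  qed
  also have "\<dots> = C ! nat ((2 * int (s - (l+1)) + 1) mod int (2*l+1))" unfolding wi_def len
    by (simp add: algebra_simps)
  also have "nat ((2 * int (s - (l+1)) + 1) mod int (2*l+1)) = 2 * s - (2*l+1)" using False s by simp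
  also have "2 * s - (2*l+1) = (2*s) mod (2*l+1)" using False s by (simp add: mod_if)
  finally show ?thesis .
qed

lemma sv_struct:
  assumes sv: "semi_valid n l C"
  shows "\<exists>v \<sigma>. (\<forall>s t. s < t \<longrightarrow> t < 2*l+1 \<longrightarrow> v s < v t) \<and> (\<forall>s<2*l+1. v s < n) \<and>
     set C = v ` {..<2*l+1} \<and>
     (\<forall>p. \<sigma> p < 2*l+1 \<and> wi C p = v (\<sigma> p)) \<and>
     (\<forall>p s. \<sigma> (p + 2 * int s) = (\<sigma> p + s) mod (2*l+1)) \<and>
     (\<forall>p. \<sigma> (p - 1) = (\<sigma> p + l) mod (2*l+1)) \<and>
     (\<forall>a<2*l+1. \<exists>p. 1 \<le> p \<and> p \<le> int (2*l+1) \<and> \<sigma> p = a)"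
proof -
  define m where "m = 2*l+1"
  define L where "L = map (\<lambda>s. wi C (2*int s + 1)) [0..<l+1] @ map (\<lambda>s. wi C (2*int s + 2)) [0..<l]"
  have len: "length C = m" and dist: "distinct C" and sub: "set C \<subseteq> {0..<n}"
    and cyc: "cyc_ordered L" using sv unfolding semi_valid_def m_def L_def by auto
  obtain k0 where sorted: "sorted_wrt (<) (rotate k0 L)" using cyc unfolding cyc_ordered_def by auto
  have lenL: "length L = m" unfolding L_def m_def by simp
  have m0: "0 < m" unfolding m_def by simp
  define v where "v t = rotate k0 L ! t" for t
  have vC: "v t = C ! ((2*(k0 + t)) mod m)" if "t < m" for t
  proof -
    have "v t = L ! ((k0 + t) mod m)" unfolding v_def using nth_rotate[of t L k0] that lenL by simp
    also have "\<dots> = C ! ((2*((k0 + t) mod m)) mod m)"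
      using L_nth[of C l "(k0 + t) mod m"] len m0 unfolding L_def m_def by simp
    also have "(2*((k0 + t) mod m)) mod m = (2*(k0 + t)) mod m" by (simp add: mod_mult_right_eq)
    finally show ?thesis .
  qed
  have mono: "\<forall>s t. s < t \<longrightarrow> t < m \<longrightarrow> v s < v t"
    using sorted unfolding sorted_wrt_iff_nth_less v_def by (simp add: lenL)
  have vn: "\<forall>s<m. v s < n"
  proof (intro allI impI)
    fix s assume "s < m"
    then have "v s \<in> set C" using vC len m0 by simp
    then show "v s < n" using sub by auto
  qed
  have setC: "set C = v ` {..<m}"
  proof -
    have "v ` {..<m} \<subseteq> set C" using vC len m0 by auto
    moreover have "inj_on v {..<m}" using mono by (metis inj_on_def lessThan_iff linorder_neqE_nat less_irrefl)
    then have "card (v ` {..<m}) = m" by (simp add: card_image)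
    moreover have "card (set C) = m" using dist len by (simp add: distinct_card)
    ultimately show ?thesis by (metis card_subset_eq finite_set)
  qed
  define \<sigma> where "\<sigma> p = nat (((p - 1) * (int l + 1) - int k0) mod int m)" for p
  have \<sigma>m: "\<sigma> p < m" for p unfolding \<sigma>_def using m0 by (simp add: nat_less_iff)
  have wiv: "wi C p = v (\<sigma> p)" for p
  proof -
    have "int ((2*(k0 + \<sigma> p)) mod m) = (2*(int k0 + int (\<sigma> p))) mod int m" by (simp add: of_nat_mod)
    also have "int (\<sigma> p) = ((p - 1) * (int l + 1) - int k0) mod int m" unfolding \<sigma>_def using m0 by simp
    also have "(2*(int k0 + ((p - 1) * (int l + 1) - int k0) mod int m)) mod int m
        = (2*(int k0 + ((p - 1) * (int l + 1) - int k0))) mod int m"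
      by (metis mod_add_right_eq mod_mult_right_eq)
    also have "2*(int k0 + ((p - 1) * (int l + 1) - int k0)) = (p - 1) + (p - 1) * int m"
      unfolding m_def by (simp add: algebra_simps)
    also have "((p - 1) + (p - 1) * int m) mod int m = (p - 1) mod int m" by simp
    finally have e: "nat ((p - 1) mod int m) = (2*(k0 + \<sigma> p)) mod m" by simp
    show ?thesis unfolding wi_def len using vC[OF \<sigma>m] e by simp
  qed
  have \<sigma>add: "\<sigma> (p + 2 * int s) = (\<sigma> p + s) mod m" for p s
  proof -
    have e: "(p + 2 * int s - 1) * (int l + 1) - int k0 = (((p - 1) * (int l + 1) - int k0) + int s) + int s * int m"
      unfolding m_def by (simp add: algebra_simps)
    have "\<sigma> (p + 2 * int s) = nat ((((p - 1) * (int l + 1) - int k0) + int s) mod int m)"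
      unfolding \<sigma>_def e by (simp only: mod_mult_self1)
    also have "\<dots> = (\<sigma> p + s) mod m" unfolding \<sigma>_def using nat_mod_add_int m0 by simp
    finally show ?thesis .
  qed
  have \<sigma>pred: "\<sigma> (p - 1) = (\<sigma> p + l) mod m" for p
  proof -
    have e: "(p - 1 - 1) * (int l + 1) - int k0 = (((p - 1) * (int l + 1) - int k0) + int l) + (-1) * int m"
      unfolding m_def by (simp add: algebra_simps)
    have "\<sigma> (p - 1) = nat ((((p - 1) * (int l + 1) - int k0) + int l) mod int m)"
      unfolding \<sigma>_def e by (simp only: mod_mult_self1)
    also have "\<dots> = (\<sigma> p + l) mod m" unfolding \<sigma>_def using nat_mod_add_int m0 by simp
    finally show ?thesis .
  qed
  have surj: "\<forall>a<m. \<exists>p. 1 \<le> p \<and> p \<le> int m \<and> \<sigma> p = a"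
  proof (intro allI impI)
    fix a assume a: "a < m"
    define p where "p = 1 + int ((2*(a + k0)) mod m)"
    have "1 \<le> p" unfolding p_def by simp
    moreover have "p \<le> int m"
    proof -
      have "(2*(a + k0)) mod m < m" using m0 by simp
      then show ?thesis unfolding p_def by linarith
    qed
    moreover have "\<sigma> p = a"
    proof -
      have "(p - 1) * (int l + 1) - int k0 = ((2*(int a + int k0)) mod int m) * (int l + 1) - int k0"
        unfolding p_def by (simp add: of_nat_mod)
      then have "((p - 1) * (int l + 1) - int k0) mod int m
          = ((2*(int a + int k0)) * (int l + 1) - int k0) mod int m"
        by (metis mod_diff_left_eq mod_mult_left_eq)
      also have "(2*(int a + int k0)) * (int l + 1) - int k0 = int a + (int a + int k0) * int m"
        unfolding m_def by (simp add: algebra_simps)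
      also have "(int a + (int a + int k0) * int m) mod int m = int a" using a by simp
      finally show ?thesis unfolding \<sigma>_def by simp
    qed
    ultimately show "\<exists>p. 1 \<le> p \<and> p \<le> int m \<and> \<sigma> p = a" by blast
  qed
  show ?thesis unfolding m_def[symmetric]
    using mono vn setC \<sigma>m wiv \<sigma>add \<sigma>pred surj by blast
qed



lemma off_of_mod: "u < n \<Longrightarrow> d < n \<Longrightarrow> (u + d) mod n = x \<Longrightarrow> off n u x = d"
  using off_add by blast

lemma cint_off:
  assumes "u < n" "w < n"
  shows "cint n u w = {x. x < n \<and> off n u x \<le> off n u w}"
proof
  show "cint n u w \<subseteq> {x. x < n \<and> off n u x \<le> off n u w}"
  proof
    fix x assume "x \<in> cint n u w"
    then obtain t where t: "x = (u + t) mod n" "t \<le> (w + n - u) mod n" unfolding cint_def by auto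
    have tn: "t < n" using t(2) assms by (metis le_less_trans mod_less_divisor gr_implies_not0 not_gr0)
    have "off n u x = t" using off_add[OF assms(1) tn] t by simp
    then show "x \<in> {x. x < n \<and> off n u x \<le> off n u w}" using t assms unfolding off_def by simp
  qed
  show "{x. x < n \<and> off n u x \<le> off n u w} \<subseteq> cint n u w"
  proof
    fix x assume x: "x \<in> {x. x < n \<and> off n u x \<le> off n u w}"
    then have "x = (u + off n u x) mod n" using off_inv assms by simp
    then show "x \<in> cint n u w" using x unfolding cint_def off_def by auto
  qed
qed

lemma maj_common2:
  assumes "finite W" "maj W n b k" "maj W n b' k'"
  shows "\<exists>w\<in>W. w \<in> win n b k \<and> w \<in> win n b' k'"
proof (rule ccontr)
  assume "\<not> ?thesis"
  then have d: "(win n b k \<inter> W) \<inter> (win n b' k' \<inter> W) = {}" by auto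
  have "card ((win n b k \<inter> W) \<union> (win n b' k' \<inter> W)) = card (win n b k \<inter> W) + card (win n b' k' \<inter> W)"
    using d assms(1) by (simp add: card_Un_disjoint)
  moreover have "card ((win n b k \<inter> W) \<union> (win n b' k' \<inter> W)) \<le> card W"
    using assms(1) by (intro card_mono) auto
  ultimately show False using assms(2,3) unfolding maj_def by linarith
qed

locale cyc =
  fixes n l :: nat and v :: "nat \<Rightarrow> nat"
  assumes mono: "\<And>s t. s < t \<Longrightarrow> t < 2*l+1 \<Longrightarrow> v s < v t"
    and vn: "\<And>s. s < 2*l+1 \<Longrightarrow> v s < n"
begin

abbreviation "M \<equiv> 2*l+1"

definition "W = v ` {..<M}"
definition "A a = cint n (v a) (v ((a + l) mod M))"

lemma n_pos: "0 < n" using vn[of 0] by simp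

lemma W_sub: "W \<subseteq> {..<n}" unfolding W_def using vn by auto
lemma W_fin: "finite W" unfolding W_def by simp
lemma v_inj: "inj_on v {..<M}"
  by (rule inj_onI) (metis lessThan_iff linorder_neqE_nat mono less_irrefl)
lemma W_card: "card W = M" unfolding W_def using v_inj by (simp add: card_image)
lemma M_le_n: "M \<le> n" using card_mono[OF _ W_sub] W_card by simp

lemma q_self: "a < M \<Longrightarrow> card {s. s < M \<and> v s + (n - v a) < n} = a"
proof -
  assume a: "a < M"
  have "{s. s < M \<and> v s + (n - v a) < n} = {..<a}"
  proof (intro set_eqI iffI)
    fix s assume "s \<in> {s. s < M \<and> v s + (n - v a) < n}"
    then have "s < M" "v s < v a" using vn[OF a] by auto
    then show "s \<in> {..<a}" using mono[of a s] a by (metis lessThan_iff linorder_neqE_nat less_asym)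
  next
    fix s assume "s \<in> {..<a}"
    then show "s \<in> {s. s < M \<and> v s + (n - v a) < n}" using mono[of s a] a vn[OF a] by auto
  qed
  then show ?thesis by simp
qed

lemma off_va: "a < M \<Longrightarrow> off n (v a) w = (w + (n - v a)) mod n"
  unfolding off_def using vn[of a] by simp

lemma A_mem: assumes a: "a < M" and s: "s \<le> l" shows "v ((a + s) mod M) \<in> A a"
proof -
  have le: "off n (v a) (v ((a + s) mod M)) \<le> off n (v a) (v ((a + l) mod M))"
  proof (cases "s = l")
    case True then show ?thesis by simp
  next
    case False
    then have "s < l" using s by simp
    then show ?thesis
      using cyc_incr[of M v n "n - v a" a s l, OF mono vn _ q_self[OF a, symmetric]] off_va[OF a]
      by simp
  qed
  have "v ((a + s) mod M) < n" "v ((a + l) mod M) < n" using vn by auto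
  then show ?thesis unfolding A_def using cint_off[OF vn[OF a]] le by simp
qed

lemma A_card: assumes a: "a < M" shows "l + 1 \<le> card (A a \<inter> W)"
proof -
  let ?f = "\<lambda>s. v ((a + s) mod M)"
  have sub: "?f ` {..l} \<subseteq> A a \<inter> W" using A_mem[OF a] unfolding W_def by auto
  have "inj_on ?f {..l}"
  proof (rule inj_onI)
    fix x y assume xy: "x \<in> {..l}" "y \<in> {..l}" "?f x = ?f y"
    then have "(a + x) mod M = (a + y) mod M" using v_inj unfolding inj_on_def by simp
    then show "x = y" using mod_add_cancel_nat[of x M y a] xy by (simp add: add.commute)
  qed
  then have "card (?f ` {..l}) = l + 1" by (simp add: card_image)
  moreover have "finite (A a \<inter> W)" using W_fin by simp
  ultimately show ?thesis using card_mono[OF _ sub] by simp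
qed

lemma A_in_win:
  assumes b: "b < n" and mj: "maj W n b k"
  shows "\<exists>a<M. A a \<subseteq> win n b k"
proof -
  define c where "c = n - b"
  define q where "q = card {s. s < M \<and> v s + c < n}"
  define ofs where "ofs i = (v i + c) mod n" for i
  have ob: "off n b x = (x + c) mod n" for x unfolding off_def c_def using b by simp
  have inc: "\<And>s t. s < t \<Longrightarrow> t < M \<Longrightarrow> ofs ((q+s) mod M) < ofs ((q+t) mod M)"
    unfolding ofs_def using cyc_incr[of M v n c q, OF mono vn _ q_def] c_def by simp
  define S where "S = {s. s < M \<and> ofs ((q+s) mod M) < k}"
  have Sdown: "\<And>s t. t \<in> S \<Longrightarrow> s < t \<Longrightarrow> s \<in> S" unfolding S_def using inc by fastforce
  have WS: "win n b k \<inter> W \<subseteq> (\<lambda>s. v ((q+s) mod M)) ` S"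
  proof
    fix w assume w: "w \<in> win n b k \<inter> W"
    then obtain i where i: "i < M" "w = v i" unfolding W_def by auto
    define s where "s = (i + (M - q mod M)) mod M"
    have "(q + s) mod M = (q + (i + (M - q mod M))) mod M" unfolding s_def by (simp add: mod_add_right_eq)
    also have "q + (i + (M - q mod M)) = (q div M) * M + i + M"
    proof -
      have h1: "q mod M < M" by simp
      have h2: "(q div M) * M + q mod M = q" by (rule div_mult_mod_eq)
      show ?thesis using h1 h2 by linarith
    qed
    also have "(q div M) * M + i + M = i + (q div M + 1) * M" by (simp add: algebra_simps)
    also have "(i + (q div M + 1) * M) mod M = i" using i by (simp only: mod_mult_self1 mod_less)
    finally have qs: "(q + s) mod M = i" .
    have "ofs i < k" using w i ob unfolding win_def ofs_def by simp
    moreover have "s < M" unfolding s_def by simp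
    ultimately have "s \<in> S" unfolding S_def using qs by simp
    then show "w \<in> (\<lambda>s. v ((q+s) mod M)) ` S" using qs i by auto
  qed
  have "l \<in> S"
  proof (rule ccontr)
    assume "l \<notin> S"
    then have "S \<subseteq> {..<l}" using Sdown by (metis lessThan_iff linorder_neqE_nat subsetI)
    then have fS: "finite S" by (rule finite_subset) simp
    have "card S \<le> l" using card_mono[OF _ \<open>S \<subseteq> {..<l}\<close>] by simp
    then have "card ((\<lambda>s. v ((q+s) mod M)) ` S) \<le> l"
      using card_image_le[OF fS, of "\<lambda>s. v ((q+s) mod M)"] by linarith
    moreover have "card (win n b k \<inter> W) \<le> card ((\<lambda>s. v ((q+s) mod M)) ` S)"
      using WS \<open>S \<subseteq> {..<l}\<close> by (intro card_mono) (auto intro: finite_subset)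
    ultimately show False using mj W_card unfolding maj_def by linarith
  qed
  define a where "a = q mod M"
  have a: "a < M" unfolding a_def by simp
  have al: "(a + l) mod M = (q + l) mod M" unfolding a_def by (simp add: mod_add_left_eq)
  have oa: "ofs a \<le> ofs ((q + l) mod M)"
    using inc[of 0 l] unfolding a_def by (cases "l = 0") (auto simp: less_imp_le)
  have ol: "ofs ((q + l) mod M) < k" using \<open>l \<in> S\<close> unfolding S_def by simp
  have van: "v a < n" and val: "v ((q+l) mod M) < n" using vn a by auto
  have "off n b (v a) = ofs a" "off n b (v ((q+l) mod M)) = ofs ((q+l) mod M)" using ob ofs_def by auto
  then have dist: "off n (v a) (v ((q+l) mod M)) = ofs ((q+l) mod M) - ofs a"
    using off_trans_le[OF b van val] oa by simp
  have "A a \<subseteq> win n b k"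
  proof
    fix x assume x: "x \<in> A a"
    then have xn: "x < n" and ox: "off n (v a) x \<le> ofs ((q+l) mod M) - ofs a"
      unfolding A_def al using cint_off[OF van val] dist by auto
    have "(b + (ofs a + off n (v a) x)) mod n = ((b + ofs a) + off n (v a) x) mod n" by (simp add: add.assoc)
    also have "(b + ofs a) mod n = v a" using off_inv[OF b van] \<open>off n b (v a) = ofs a\<close> by simp
    then have "((b + ofs a) + off n (v a) x) mod n = (v a + off n (v a) x) mod n"
      by (metis mod_add_left_eq)
    also have "\<dots> = x" using off_inv[OF van xn] .
    finally have "(b + (ofs a + off n (v a) x)) mod n = x" .
    moreover have "ofs a + off n (v a) x < n" using ox oa ol off_lt[of n b] ob ofs_def
      by (metis le_add_diff_inverse le_less_trans add_le_mono1 add.commute n_pos mod_less_divisor)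
    ultimately have "off n b x = ofs a + off n (v a) x" using off_add[OF b] by metis
    then show "x \<in> win n b k" unfolding win_def using xn ox oa ol by simp
  qed
  then show ?thesis using a by blast
qed

end



context cyc
begin

definition "R r = {e. e \<subseteq> {0..<n} \<and> card e = r}"
definition "Bad r = {e \<in> R r. \<exists>a<M. e \<inter> A a = {}}"
definition "F r b k = {e \<in> R r. (b + (n - 1)) mod n \<in> e \<and> (b + k) mod n \<in> e \<and> e \<inter> win n b k = {}}"
definition "P = Sigma {..<n-1} (\<lambda>k. {b. b < n \<and> maj W n b k})"

lemma F_sub_Bad: assumes "b < n" "maj W n b k" shows "F r b k \<subseteq> Bad r"
proof
  fix e assume e: "e \<in> F r b k"
  obtain a where "a < M" "A a \<subseteq> win n b k" using A_in_win assms by blast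
  then show "e \<in> Bad r" using e unfolding F_def Bad_def by blast
qed

lemma F_disj:
  assumes b: "b < n" "maj W n b k" and b': "b' < n" "maj W n b' k'"
    and e: "e \<in> F r b k" "e \<in> F r b' k'" and kn: "k < n" "k' < n"
  shows "b = b' \<and> k = k'"
proof -
  obtain w where w: "w \<in> W" "w \<in> win n b k" "w \<in> win n b' k'"
    using maj_common2[OF W_fin b(2) b'(2)] by blast
  have wn: "w < n" using w W_sub by auto
  define t where "t = off n b w"
  define t' where "t' = off n b' w"
  have tk: "t < k" and tk': "t' < k'" using w unfolding t_def t'_def win_def by auto
  have bt: "(b + t) mod n = w" unfolding t_def using off_inv[OF b(1) wn] .
  have bt': "(b' + t') mod n = w" unfolding t'_def using off_inv[OF b'(1) wn] .
  have n1: "0 < n" using b by simp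
  \<comment> \<open>the predecessor point of a window is not inside the other window\<close>
  have key: "\<not> t < t'" if bb: "b < n" "b' < n" and ee: "e \<in> F r b k" "e \<in> F r b' k'"
    and tt: "(b + t) mod n = w" "(b' + t') mod n = w" "t' < k'" "t < n" "t' < n" for b b' k k' t t'
  proof
    assume lt: "t < t'"
    define x where "x = (b + (n - 1)) mod n"
    have "x \<in> e" using ee(1) unfolding F_def x_def by simp
    have "(b' + (t' - t - 1)) mod n = (b' + t' + (n - 1 - t)) mod n"
    proof -
      have "b' + t' + (n - 1 - t) = (b' + (t' - t - 1)) + n" using lt tt(4) by simp
      then show ?thesis by (metis mod_add_self2)
    qed
    also have "\<dots> = ((b' + t') mod n + (n - 1 - t)) mod n" by (simp add: mod_add_left_eq)
    also have "\<dots> = ((b + t) mod n + (n - 1 - t)) mod n" using tt by simp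
    also have "\<dots> = (b + t + (n - 1 - t)) mod n" by (simp add: mod_add_left_eq)
    also have "b + t + (n - 1 - t) = b + (n - 1)" using tt(4) by simp
    finally have "(b' + (t' - t - 1)) mod n = x" unfolding x_def .
    then have "off n b' x = t' - t - 1" using off_add[OF bb(2), of "t' - t - 1"] tt by simp
    then have "x \<in> win n b' k'" unfolding win_def x_def using tt lt by simp
    then show False using \<open>x \<in> e\<close> ee(2) unfolding F_def by blast
  qed
  have tn: "t < n" "t' < n" unfolding t_def t'_def using n1 by (auto simp: off_lt)
  have "\<not> t < t'" using key[OF b(1) b'(1) e bt bt' tk' tn] .
  moreover have "\<not> t' < t" using key[OF b'(1) b(1) e(2) e(1) bt' bt tk tn(2) tn(1)] .
  ultimately have tt: "t = t'" by simp
  then have bb: "b = b'" using bt bt' mod_add_cancel_nat[of b n b' t] b b' by (simp add: add.commute)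
  have kk: "\<not> k < k'" if bb: "b < n" and ee: "e \<in> F r b k" "e \<in> F r b k'" and kn: "k < n"
    for k k'
  proof
    assume "k < k'"
    have "(b + k) mod n \<in> e" using ee(1) unfolding F_def by simp
    moreover have "off n b ((b + k) mod n) = k" using off_add[OF bb kn] .
    then have "(b + k) mod n \<in> win n b k'" unfolding win_def using \<open>k < k'\<close> n1 by simp
    ultimately show False using ee(2) unfolding F_def by blast
  qed
  have "\<not> k < k'" using kk[OF b(1) e(1)] e(2) bb kn by simp
  moreover have "\<not> k' < k" using kk[OF b(1), of k' k] e bb kn by simp
  ultimately show ?thesis using bb by simp
qed

lemma Bad_cover:
  assumes e: "e \<in> Bad r" and r: "2 \<le> r"
  shows "\<exists>k b. (k, b) \<in> P \<and> e \<in> F r b k"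
proof -
  have eR: "e \<subseteq> {0..<n}" "card e = r" using e unfolding Bad_def R_def by auto
  obtain a where a: "a < M" "e \<inter> A a = {}" using e unfolding Bad_def by auto
  define u where "u = v a"
  have un: "u < n" unfolding u_def using vn a by simp
  define L where "L = off n u (v ((a + l) mod M))"
  have Ln: "L < n" unfolding L_def using n_pos by (simp add: off_lt)
  have Aeq: "A a = {x. x < n \<and> off n u x \<le> L}"
    unfolding A_def u_def L_def using cint_off vn a by simp
  have fe: "finite e" using eR(1) by (rule finite_subset) simp
  have ene: "e \<noteq> {}" using eR r by auto
  define D where "D = {d. d < n \<and> (u + (n - 1 - d)) mod n \<in> e}"
  obtain y where y: "y \<in> e" using ene by auto
  have yn: "y < n" using y eR by auto
  have "n - 1 - off n u y \<in> D"
  proof -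
    have "off n u y < n" using n_pos by (simp add: off_lt)
    then have "u + (n - 1 - (n - 1 - off n u y)) = u + off n u y" by simp
    then show ?thesis unfolding D_def using off_inv[OF un yn] y n_pos by simp
  qed
  then have Dne: "\<exists>d. d \<in> D" by blast
  define d0 where "d0 = (LEAST d. d \<in> D)"
  have d0D: "d0 \<in> D" unfolding d0_def using Dne by (metis LeastI)
  have d0n: "d0 < n" using d0D unfolding D_def by simp
  have notD: "d \<notin> D" if "d < d0" for d using that unfolding d0_def by (rule not_less_Least)
  define b where "b = (u + (n - d0)) mod n"
  have bn: "b < n" unfolding b_def using n_pos by simp
  have bmod: "(b + j) mod n = (u + (n - d0) + j) mod n" for j
    unfolding b_def by (simp add: mod_add_left_eq)
  define x0 where "x0 = (b + (n - 1)) mod n"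
  have x0e: "x0 \<in> e"
  proof -
    have h: "u + (n - d0) + (n - 1) = u + (n - 1 - d0) + n" using d0n by simp
    have "x0 = (u + (n - d0) + (n - 1)) mod n" unfolding x0_def by (rule bmod)
    also have "\<dots> = (u + (n - 1 - d0) + n) mod n" by (simp only: h)
    also have "\<dots> = (u + (n - 1 - d0)) mod n" by (rule mod_add_self2)
    finally have "x0 = (u + (n - 1 - d0)) mod n" .
    moreover have "(u + (n - 1 - d0)) mod n \<in> e" using d0D unfolding D_def by blast
    ultimately show ?thesis by (simp only:)
  qed
  define G where "G = {j. j < n \<and> (b + j) mod n \<in> e}"
  have n1G: "n - 1 \<in> G" unfolding G_def using x0e n_pos unfolding x0_def by simp
  define g where "g = (LEAST j. j \<in> G)"
  have gG: "g \<in> G" unfolding g_def using n1G by (metis LeastI)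
  have gle: "g \<le> j" if "j \<in> G" for j unfolding g_def using that by (rule Least_le)
  have notG: "(b + j) mod n \<notin> e" if j: "j \<le> d0 + L" "j < n" for j
  proof (cases "j < d0")
    case True
    have h: "u + (n - d0) + j = u + (n - 1 - (d0 - 1 - j))" using True d0n by simp
    have "(b + j) mod n = (u + (n - 1 - (d0 - 1 - j))) mod n" by (simp only: bmod h)
    moreover have "d0 - 1 - j \<notin> D" using notD[of "d0 - 1 - j"] True by simp
    ultimately show ?thesis unfolding D_def using d0n by simp
  next
    case False
    have h: "u + (n - d0) + j = u + (j - d0) + n" using False d0n by simp
    have e1: "(b + j) mod n = (u + (j - d0)) mod n" by (simp only: bmod h mod_add_self2)
    have "j - d0 < n" using j by simp
    then have "off n u ((u + (j - d0)) mod n) = j - d0" using off_add[OF un] by simp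
    then have "(b + j) mod n \<in> A a" unfolding Aeq e1 using j n_pos by simp
    then show ?thesis using a(2) by blast
  qed
  have gbig: "d0 + L < g"
  proof (rule ccontr)
    assume "\<not> d0 + L < g"
    then show False using notG[of g] gG unfolding G_def by simp
  qed
  have gsmall: "g < n - 1"
  proof -
    have "card e \<ge> 2" using eR r by simp
    then obtain y where y: "y \<in> e" "y \<noteq> x0"
      by (metis card_2_iff' card_le_Suc_iff numeral_2_eq_2 insert_iff ex_in_conv)
    have yn: "y < n" using y eR by auto
    define j where "j = off n b y"
    have bj: "(b + j) mod n = y" unfolding j_def using off_inv[OF bn yn] .
    have jn: "j < n" unfolding j_def using n_pos by (simp add: off_lt)
    have "j \<noteq> n - 1" using bj y(2) unfolding x0_def by auto
    then have "j < n - 1" using jn by simp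
    moreover have "j \<in> G" unfolding G_def using bj y jn by simp
    ultimately show ?thesis using gle[of j] by simp
  qed
  have Awin: "A a \<subseteq> win n b g"
  proof
    fix x assume "x \<in> A a"
    then have xn: "x < n" and ox: "off n u x \<le> L" unfolding Aeq by auto
    have h: "u + (n - d0) + (d0 + off n u x) = (u + off n u x) + n" using d0n by simp
    have "(b + (d0 + off n u x)) mod n = (u + off n u x) mod n" by (simp only: bmod h mod_add_self2)
    also have "\<dots> = x" using off_inv[OF un xn] .
    finally have "off n b x = d0 + off n u x" using off_add[OF bn, of "d0 + off n u x"] ox gbig gsmall
      by simp
    then show "x \<in> win n b g" unfolding win_def using xn ox gbig by simp
  qed
  have majb: "maj W n b g"
  proof -
    have "card (A a \<inter> W) \<le> card (win n b g \<inter> W)"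
      using Awin W_fin by (intro card_mono) auto
    then show ?thesis using A_card[OF a(1)] W_card unfolding maj_def by linarith
  qed
  have "e \<in> F r b g"
  proof -
    have "(b + g) mod n \<in> e" using gG unfolding G_def by simp
    moreover have "e \<inter> win n b g = {}"
    proof (rule ccontr)
      assume "e \<inter> win n b g \<noteq> {}"
      then obtain w where w: "w \<in> e" "w \<in> win n b g" by auto
      then have wn: "w < n" and ow: "off n b w < g" unfolding win_def by auto
      have "off n b w \<in> G" unfolding G_def using off_inv[OF bn wn] w(1) n_pos by (simp add: off_lt)
      then show False using gle ow by fastforce
    qed
    ultimately show ?thesis using e x0e unfolding F_def Bad_def x0_def by simp
  qed
  moreover have "(g, b) \<in> P" unfolding P_def using gsmall bn majb by simp
  ultimately show ?thesis by blast
qed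

lemma card_F:
  assumes b: "b < n" and k: "k < n - 1" and r: "2 \<le> r"
  shows "card (F r b k) = (n - 2 - k) choose (r - 2)"
proof -
  define x where "x = (b + (n - 1)) mod n"
  define y where "y = (b + k) mod n"
  define Rest where "Rest = {0..<n} - win n b k - {x, y}"
  have kn: "k \<le> n" using k by simp
  have ox: "off n b x = n - 1" unfolding x_def using off_add[OF b, of "n - 1"] n_pos by simp
  have oy: "off n b y = k" unfolding y_def using off_add[OF b, of k] k by simp
  have xy: "x \<noteq> y" using ox oy k by auto
  have xn: "x < n" "y < n" unfolding x_def y_def using n_pos by auto
  have xw: "x \<notin> win n b k" "y \<notin> win n b k" using ox oy k unfolding win_def by auto
  have winsub: "win n b k \<subseteq> {0..<n}" unfolding win_def by auto
  have cardRest: "card Rest = n - 2 - k"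
  proof -
    have "card ({0..<n} - win n b k) = n - k"
      using card_Diff_subset[OF finite_win winsub] card_win[OF b kn] by simp
    moreover have "{x, y} \<subseteq> {0..<n} - win n b k" using xn xw by auto
    ultimately have "card Rest = n - k - 2" unfolding Rest_def using xy
      by (simp add: card_Diff_subset)
    then show ?thesis by simp
  qed
  have eq: "F r b k = (\<lambda>s. s \<union> {x, y}) ` {s. s \<subseteq> Rest \<and> card s = r - 2}"
  proof
    show "F r b k \<subseteq> (\<lambda>s. s \<union> {x, y}) ` {s. s \<subseteq> Rest \<and> card s = r - 2}"
    proof
      fix e assume e: "e \<in> F r b k"
      then have e1: "e \<subseteq> {0..<n}" "card e = r" "x \<in> e" "y \<in> e" "e \<inter> win n b k = {}"
        unfolding F_def R_def x_def y_def by auto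
      have fe: "finite e" using e1(1) by (rule finite_subset) simp
      have "e - {x, y} \<subseteq> Rest" unfolding Rest_def using e1 by auto
      moreover have "card (e - {x, y}) = r - 2" using e1 xy fe by (simp add: card_Diff_subset)
      moreover have "e = (e - {x, y}) \<union> {x, y}" using e1 by auto
      ultimately show "e \<in> (\<lambda>s. s \<union> {x, y}) ` {s. s \<subseteq> Rest \<and> card s = r - 2}" by blast
    qed
    show "(\<lambda>s. s \<union> {x, y}) ` {s. s \<subseteq> Rest \<and> card s = r - 2} \<subseteq> F r b k"
    proof
      fix e assume "e \<in> (\<lambda>s. s \<union> {x, y}) ` {s. s \<subseteq> Rest \<and> card s = r - 2}"
      then obtain s where s: "s \<subseteq> Rest" "card s = r - 2" "e = s \<union> {x, y}" by auto
      have fs: "finite s" using s(1) unfolding Rest_def by (rule finite_subset) simp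
      have "x \<notin> s" "y \<notin> s" using s(1) unfolding Rest_def by auto
      then have "card e = r" using s fs xy r by (simp add: card_insert_if)
      moreover have "e \<subseteq> {0..<n}" using s xn unfolding Rest_def by auto
      moreover have "e \<inter> win n b k = {}" using s xw unfolding Rest_def by auto
      ultimately show "e \<in> F r b k" using s unfolding F_def R_def x_def y_def by auto
    qed
  qed
  have inj: "inj_on (\<lambda>s. s \<union> {x, y}) {s. s \<subseteq> Rest \<and> card s = r - 2}"
  proof (rule inj_onI)
    fix s t assume st: "s \<in> {s. s \<subseteq> Rest \<and> card s = r - 2}" "t \<in> {s. s \<subseteq> Rest \<and> card s = r - 2}"
      "s \<union> {x, y} = t \<union> {x, y}"
    then have "x \<notin> s" "y \<notin> s" "x \<notin> t" "y \<notin> t" unfolding Rest_def by auto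
    then show "s = t" using st(3) by blast
  qed
  have "finite Rest" unfolding Rest_def by simp
  then show ?thesis unfolding eq using inj cardRest by (simp add: card_image n_subsets)
qed

lemma Bad_eq: assumes r: "2 \<le> r" shows "Bad r = (\<Union>(k, b)\<in>P. F r b k)"
proof
  show "Bad r \<subseteq> (\<Union>(k, b)\<in>P. F r b k)" using Bad_cover[OF _ r] by blast
  show "(\<Union>(k, b)\<in>P. F r b k) \<subseteq> Bad r" using F_sub_Bad unfolding P_def by blast
qed

lemma card_Bad:
  assumes r: "2 \<le> r"
  shows "card (Bad r) = (\<Sum>k<n-1. cnt W n k * ((n - 2 - k) choose (r - 2)))"
proof -
  have finP: "finite P" unfolding P_def by simp
  have finF: "\<forall>i\<in>P. finite ((\<lambda>(k, b). F r b k) i)"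
    unfolding F_def R_def by (auto intro: finite_subset[of _ "Pow {0..<n}"])
  have disj: "\<forall>i\<in>P. \<forall>j\<in>P. i \<noteq> j \<longrightarrow> (\<lambda>(k, b). F r b k) i \<inter> (\<lambda>(k, b). F r b k) j = {}"
  proof (intro ballI impI)
    fix i j assume i: "i \<in> P" and j: "j \<in> P" and ij: "i \<noteq> j"
    obtain k b where ikb: "i = (k, b)" by (cases i)
    obtain k' b' where jkb: "j = (k', b')" by (cases j)
    show "(\<lambda>(k, b). F r b k) i \<inter> (\<lambda>(k, b). F r b k) j = {}"
    proof (rule ccontr)
      assume "\<not> ?thesis"
      then obtain e where "e \<in> F r b k" "e \<in> F r b' k'" using ikb jkb by auto
      moreover have "b < n" "maj W n b k" "b' < n" "maj W n b' k'" "k < n" "k' < n"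
        using i j ikb jkb unfolding P_def by auto
      ultimately have "b = b' \<and> k = k'" using F_disj by blast
      then show False using ij ikb jkb by simp
    qed
  qed
  have "card (Bad r) = (\<Sum>i\<in>P. card ((\<lambda>(k, b). F r b k) i))"
    unfolding Bad_eq[OF r] using card_UN_disjoint[OF finP finF disj] by simp
  also have "\<dots> = (\<Sum>i\<in>P. (\<lambda>(k, b). (n - 2 - k) choose (r - 2)) i)"
  proof (rule sum.cong)
    fix i assume "i \<in> P"
    then show "card ((\<lambda>(k, b). F r b k) i) = (\<lambda>(k, b). (n - 2 - k) choose (r - 2)) i"
      using card_F r unfolding P_def by auto
  qed simp
  also have "\<dots> = (\<Sum>k<n-1. \<Sum>b\<in>{b. b < n \<and> maj W n b k}. (n - 2 - k) choose (r - 2))"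
    unfolding P_def by (subst sum.Sigma) auto
  also have "\<dots> = (\<Sum>k<n-1. cnt W n k * ((n - 2 - k) choose (r - 2)))"
    unfolding cnt_def by simp
  finally show ?thesis .
qed

definition "Hv r = {e \<in> R r. \<forall>a<M. e \<inter> A a \<noteq> {}}"

lemma card_Hv:
  assumes r: "2 \<le> r"
  shows "card (Hv r) + (\<Sum>k<n-1. cnt W n k * ((n - 2 - k) choose (r - 2))) = n choose r"
proof -
  have "Hv r = R r - Bad r" unfolding Hv_def Bad_def by auto
  moreover have "Bad r \<subseteq> R r" unfolding Bad_def by auto
  moreover have "finite (R r)" unfolding R_def by (auto intro: finite_subset[of _ "Pow {0..<n}"])
  moreover have "card (R r) = n choose r" unfolding R_def using n_subsets[of "{0..<n}" r] by simp
  ultimately show ?thesis using card_Bad[OF r]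
    by (metis card_Diff_subset card_mono le_add_diff_inverse2 finite_subset)
qed

end


lemma sum_identity:
  fixes f c :: "nat \<Rightarrow> nat"
  assumes sym: "\<And>k. k \<le> n \<Longrightarrow> c k + c (n - k) = n"
  shows "2 * (\<Sum>k\<in>{0..n}. int (f k) * int (c k))
       = (\<Sum>k\<in>{0..n}. (int (f k) - int (f (n - k))) * int (c k)) + (\<Sum>k\<in>{0..n}. int n * int (f (n - k)))"
proof -
  have rev: "(\<Sum>k\<in>{0..n}. int (f k) * int (c k)) = (\<Sum>k\<in>{0..n}. int (f (n - k)) * int (c (n - k)))"
    using sum.atLeastAtMost_rev[of "\<lambda>k. int (f k) * int (c k)" 0 n] by simp
  also have "\<dots> = (\<Sum>k\<in>{0..n}. int (f (n - k)) * (int n - int (c k)))"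
  proof (rule sum.cong)
    fix k assume "k \<in> {0..n}"
    then have "int (c (n - k)) = int n - int (c k)" using sym[of k] by simp
    then show "int (f (n - k)) * int (c (n - k)) = int (f (n - k)) * (int n - int (c k))" by simp
  qed simp
  finally have e: "(\<Sum>k\<in>{0..n}. int (f k) * int (c k)) = (\<Sum>k\<in>{0..n}. int (f (n - k)) * (int n - int (c k)))" .
  have "2 * (\<Sum>k\<in>{0..n}. int (f k) * int (c k))
      = (\<Sum>k\<in>{0..n}. int (f k) * int (c k)) + (\<Sum>k\<in>{0..n}. int (f (n - k)) * (int n - int (c k)))"
    using e by simp
  also have "\<dots> = (\<Sum>k\<in>{0..n}. int (f k) * int (c k) + int (f (n - k)) * (int n - int (c k)))"
    by (simp add: sum.distrib)
  also have "\<dots> = (\<Sum>k\<in>{0..n}. (int (f k) - int (f (n - k))) * int (c k) + int n * int (f (n - k)))"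
    by (rule sum.cong) (auto simp: algebra_simps)
  also have "\<dots> = (\<Sum>k\<in>{0..n}. (int (f k) - int (f (n - k))) * int (c k)) + (\<Sum>k\<in>{0..n}. int n * int (f (n - k)))"
    by (simp add: sum.distrib)
  finally show ?thesis .
qed

lemma sum_compare:
  fixes f cW cB :: "nat \<Rightarrow> nat"
  assumes fz: "\<And>k. n - 1 \<le> k \<Longrightarrow> f k = 0"
    and fmono: "\<And>k. 2 * k \<le> n \<Longrightarrow> f (n - k) \<le> f k"
    and symW: "\<And>k. k \<le> n \<Longrightarrow> cW k + cW (n - k) = n"
    and symB: "\<And>k. k \<le> n \<Longrightarrow> cB k + cB (n - k) = n"
    and le: "\<And>k. 2 * k \<le> n \<Longrightarrow> cW k \<le> cB k"
  shows "(\<Sum>k<n-1. cW k * f k) \<le> (\<Sum>k<n-1. cB k * f k)"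
    and "2 * k0 \<le> n \<Longrightarrow> cW k0 < cB k0 \<Longrightarrow> f (n - k0) < f k0 \<Longrightarrow>
         (\<Sum>k<n-1. cW k * f k) < (\<Sum>k<n-1. cB k * f k)"
proof -
  have ext: "int (\<Sum>k<n-1. c k * f k) = (\<Sum>k\<in>{0..n}. int (f k) * int (c k))" for c
  proof -
    have "(\<Sum>k<n-1. c k * f k) = (\<Sum>k\<in>{0..n}. c k * f k)"
      by (rule sum.mono_neutral_left) (auto simp: fz)
    then show ?thesis by (simp add: algebra_simps)
  qed
  define D where "D k = (int (f k) - int (f (n - k))) * (int (cW k) - int (cB k))" for k
  have diff: "2 * int (\<Sum>k<n-1. cW k * f k) - 2 * int (\<Sum>k<n-1. cB k * f k) = (\<Sum>k\<in>{0..n}. D k)"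
  proof -
    have eW: "2 * int (\<Sum>k<n-1. cW k * f k) = (\<Sum>k\<in>{0..n}. (int (f k) - int (f (n - k))) * int (cW k)) + (\<Sum>k\<in>{0..n}. int n * int (f (n - k)))"
      using ext[of cW] sum_identity[of n cW f, OF symW] by simp
    have eB: "2 * int (\<Sum>k<n-1. cB k * f k) = (\<Sum>k\<in>{0..n}. (int (f k) - int (f (n - k))) * int (cB k)) + (\<Sum>k\<in>{0..n}. int n * int (f (n - k)))"
      using ext[of cB] sum_identity[of n cB f, OF symB] by simp
    have "(\<Sum>k\<in>{0..n}. D k) = (\<Sum>k\<in>{0..n}. (int (f k) - int (f (n - k))) * int (cW k)) - (\<Sum>k\<in>{0..n}. (int (f k) - int (f (n - k))) * int (cB k))"
      unfolding D_def sum_subtractf[symmetric] by (rule sum.cong) (auto simp: algebra_simps)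
    then show ?thesis using eW eB by linarith
  qed
  have Dle: "D k \<le> 0" if "k \<in> {0..n}" for k
  proof (cases "2 * k \<le> n")
    case True
    then have "int (f k) - int (f (n - k)) \<ge> 0" using fmono[OF True] by simp
    moreover have "int (cW k) - int (cB k) \<le> 0" using le[OF True] by simp
    ultimately show ?thesis unfolding D_def by (simp add: mult_nonneg_nonpos)
  next
    case False
    have kn: "k \<le> n" using that by simp
    have h: "2 * (n - k) \<le> n" using False by simp
    have "f (n - (n - k)) \<le> f (n - k)" using fmono[OF h] .
    then have "int (f k) - int (f (n - k)) \<le> 0" using kn by simp
    moreover have "cW (n - k) \<le> cB (n - k)" using le[OF h] .
    then have "int (cW k) - int (cB k) \<ge> 0" using symW[OF kn] symB[OF kn] by simp
    ultimately show ?thesis unfolding D_def by (simp add: mult_nonpos_nonneg)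
  qed
  have "(\<Sum>k\<in>{0..n}. D k) \<le> 0" by (rule sum_nonpos) (use Dle in blast)
  then show "(\<Sum>k<n-1. cW k * f k) \<le> (\<Sum>k<n-1. cB k * f k)" using diff by linarith
  assume k0: "2 * k0 \<le> n" "cW k0 < cB k0" "f (n - k0) < f k0"
  have "D k0 < 0" unfolding D_def using k0 by (simp add: mult_pos_neg)
  moreover have "k0 \<in> {0..n}" using k0 by simp
  moreover have "(\<Sum>k\<in>{0..n} - {k0}. D k) \<le> 0" by (rule sum_nonpos) (use Dle in blast)
  ultimately have "(\<Sum>k\<in>{0..n}. D k) < 0"
    using sum.remove[of "{0..n}" k0 D] by simp
  then show "(\<Sum>k<n-1. cW k * f k) < (\<Sum>k<n-1. cB k * f k)" using diff by linarith
qed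



definition Nsum :: "nat \<Rightarrow> nat \<Rightarrow> nat set \<Rightarrow> nat" where
  "Nsum n r W = (\<Sum>k<n-1. cnt W n k * ((n - 2 - k) choose (r - 2)))"

lemma sv_count:
  assumes sv: "semi_valid n l C" and r: "2 \<le> r"
  shows "card (H n r C) + Nsum n r (set C) = n choose r"
    and "set C \<subseteq> {..<n}" and "card (set C) = 2*l+1"
proof -
  obtain v \<sigma> where mono: "\<forall>s t. s < t \<longrightarrow> t < 2*l+1 \<longrightarrow> v s < v t" and vn: "\<forall>s<2*l+1. v s < n"
    and setC: "set C = v ` {..<2*l+1}"
    and \<sigma>: "\<forall>p. \<sigma> p < 2*l+1 \<and> wi C p = v (\<sigma> p)"
    and \<sigma>pred: "\<forall>p. \<sigma> (p - 1) = (\<sigma> p + l) mod (2*l+1)"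
    and surj: "\<forall>a<2*l+1. \<exists>p. 1 \<le> p \<and> p \<le> int (2*l+1) \<and> \<sigma> p = a"
    using sv_struct[OF sv] by blast
  interpret cyc n l v using mono vn by unfold_locales auto
  have len: "length C = 2*l+1" using sv unfolding semi_valid_def by simp
  have WC: "W = set C" unfolding W_def setC by simp
  have "H n r C = Hv r"
  proof -
    have "(\<forall>p\<in>{1..int (length C)}. e \<inter> cint n (wi C p) (wi C (p - 1)) \<noteq> {})
        \<longleftrightarrow> (\<forall>a<M. e \<inter> A a \<noteq> {})" for e
    proof
      assume h: "\<forall>p\<in>{1..int (length C)}. e \<inter> cint n (wi C p) (wi C (p - 1)) \<noteq> {}"
      show "\<forall>a<M. e \<inter> A a \<noteq> {}"
      proof (intro allI impI)
        fix a assume "a < M"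
        then obtain p where p: "1 \<le> p" "p \<le> int M" "\<sigma> p = a" using surj by blast
        have "cint n (wi C p) (wi C (p - 1)) = A a"
          unfolding A_def using \<sigma> \<sigma>pred p by metis
        moreover have "p \<in> {1..int (length C)}" using p len by simp
        ultimately show "e \<inter> A a \<noteq> {}" using h p by metis
      qed
    next
      assume h: "\<forall>a<M. e \<inter> A a \<noteq> {}"
      show "\<forall>p\<in>{1..int (length C)}. e \<inter> cint n (wi C p) (wi C (p - 1)) \<noteq> {}"
      proof
        fix p :: int
        have "cint n (wi C p) (wi C (p - 1)) = A (\<sigma> p)"
          unfolding A_def using \<sigma> \<sigma>pred by metis
        then show "e \<inter> cint n (wi C p) (wi C (p - 1)) \<noteq> {}" using h \<sigma> by metis
      qed
    qed
    then show ?thesis unfolding H_def Hv_def R_def by auto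
  qed
  then show "card (H n r C) + Nsum n r (set C) = n choose r"
    using card_Hv[OF r] WC unfolding Nsum_def by simp
  show "set C \<subseteq> {..<n}" using W_sub WC by simp
  show "card (set C) = 2*l+1" using W_card WC by simp
qed

lemma binom_strict_upper:
  assumes "a < b" "1 \<le> j" "j \<le> b"
  shows "a choose j < b choose j"
proof -
  obtain b' where b': "b = Suc b'" using assms by (cases b) auto
  obtain j' where j': "j = Suc j'" using assms by (cases j) auto
  have "b choose j = (b' choose j') + (b' choose j)" unfolding b' j' by simp
  moreover have "0 < b' choose j'" using assms b' j' by simp
  moreover have "a choose j \<le> b' choose j" using assms b' by (intro binomial_right_mono) simp
  ultimately show ?thesis by linarith
qed

lemma arc_small:
  assumes W: "W \<subseteq> {..<n}" "card W = 2*l+1" and l: "1 \<le> l" and n: "n \<le> 2*l+2"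
  shows "arc n (2*l+1) W"
proof -
  have fW: "finite W" using W(1) by (rule finite_subset) simp
  have nge: "2*l+1 \<le> n" using card_mono[OF _ W(1)] W(2) by simp
  have "l + 1 \<le> cnt W n (l+1)"
  proof (cases "n = 2*l+1")
    case True
    have "cnt W n l + cnt W n (n - l) = n" using cnt_sym[OF fW W(1) W(2)] nge by simp
    moreover have "cnt W n l = 0" using cnt_small[OF W(2)] by simp
    moreover have "n - l = l + 1" using True by simp
    ultimately show ?thesis using True by simp
  next
    case False
    then have nn: "n = 2*l+2" using n nge by simp
    have "cnt W n (l+1) + cnt W n (n - (l+1)) = n" using cnt_sym[OF fW W(1) W(2), of "l+1"] nn by simp
    moreover have "n - (l+1) = l + 1" using nn by simp
    ultimately show ?thesis using nn by simp
  qed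
  then show ?thesis using arc_of_cnt[OF fW W(1) W(2) l] by simp
qed

lemma Nsum_compare:
  assumes W: "W \<subseteq> {..<n}" "card W = 2*l+1" and B: "B \<subseteq> {..<n}" "card B = 2*l+1" "arc n (2*l+1) B"
    and r: "3 \<le> r" and l: "1 \<le> l"
  shows "Nsum n r W \<le> Nsum n r B"
    and "\<not> arc n (2*l+1) W \<Longrightarrow> 3*r - 4 \<le> n \<Longrightarrow> Nsum n r W < Nsum n r B"
proof -
  define f where "f k = (n - 2 - k) choose (r - 2)" for k
  have fW: "finite W" using W(1) by (rule finite_subset) simp
  have fB: "finite B" using B(1) by (rule finite_subset) simp
  have nge: "2*l+1 \<le> n" using card_mono[OF _ W(1)] W(2) by simp
  obtain j where j: "B = {(j + s) mod n | s. s < 2*l+1}" using B(3) unfolding arc_def by blast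
  have fz: "f k = 0" if "n - 1 \<le> k" for k unfolding f_def using that r by simp
  have fmono: "f (n - k) \<le> f k" if "2 * k \<le> n" for k
    unfolding f_def using that by (intro binomial_right_mono) simp
  have symW: "cnt W n k + cnt W n (n - k) = n" if "k \<le> n" for k using cnt_sym[OF fW W(1) W(2) that] .
  have symB: "cnt B n k + cnt B n (n - k) = n" if "k \<le> n" for k using cnt_sym[OF fB B(1) B(2) that] .
  have le: "cnt W n k \<le> cnt B n k" if k: "2 * k \<le> n" for k
  proof (cases "k \<le> l")
    case True
    then show ?thesis using cnt_small[OF W(2) True] by simp
  next
    case False
    have "cnt W n k \<le> k" using cnt_le[OF fW W(1) k] .
    also have "k \<le> cnt B n k" using cnt_arc_ge[of "2*l+1" l n k B j] nge False k j by simp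
    finally show ?thesis .
  qed
  note cmp = sum_compare[of n f "cnt W n" "cnt B n", OF fz fmono symW symB le]
  show "Nsum n r W \<le> Nsum n r B" unfolding Nsum_def using cmp(1) unfolding f_def by (simp add: mult.commute)
  assume na: "\<not> arc n (2*l+1) W" and rn: "3*r - 4 \<le> n"
  have n3: "2*l+3 \<le> n" using arc_small[OF W l] na by linarith
  have cW: "cnt W n (l+1) < l+1" using arc_of_cnt[OF fW W(1) W(2) l] na by linarith
  have cB: "l+1 \<le> cnt B n (l+1)" using cnt_arc_ge[of "2*l+1" l n "l+1" B j] nge j by simp
  have nlr: "l + r + 1 \<le> n" using n3 rn r by linarith
  have "f (n - (l+1)) < f (l+1)"
  proof -
    have "n - 2 - (n - (l+1)) = l - 1" using nge by simp
    moreover have "l - 1 < n - 2 - (l+1)" using n3 l by simp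
    moreover have "r - 2 \<le> n - 2 - (l+1)" using nlr by simp
    ultimately show ?thesis unfolding f_def using binom_strict_upper r by simp
  qed
  then have "(\<Sum>k<n-1. cnt W n k * f k) < (\<Sum>k<n-1. cnt B n k * f k)"
    using cmp(2)[of "l+1"] n3 cW cB by simp
  then show "Nsum n r W < Nsum n r B" unfolding Nsum_def f_def by (simp add: mult.commute)
qed

lemma mono_id:
  fixes g :: "nat \<Rightarrow> nat"
  assumes mono: "\<And>s t. s < t \<Longrightarrow> t < M \<Longrightarrow> g s < g t" and bd: "\<And>s. s < M \<Longrightarrow> g s < M"
    and s: "s < M"
  shows "g s = s"
proof -
  have ge: "s + d < M \<Longrightarrow> g s + d \<le> g (s + d)" for s d
  proof (induction d)
    case 0 then show ?case by simp
  next
    case (Suc d)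
    then have "g s + d \<le> g (s + d)" by simp
    moreover have "g (s + d) < g (s + Suc d)" using mono[of "s + d" "s + Suc d"] Suc.prems by simp
    ultimately show ?case by simp
  qed
  have "g 0 + s \<le> g s" using ge[of 0 s] s by simp
  moreover have "g s + (M - 1 - s) \<le> g (M - 1)" using ge[of s "M - 1 - s"] s by simp
  moreover have "g (M - 1) < M" using bd s by simp
  ultimately show ?thesis by linarith
qed



lemma consec_iff:
  assumes sv: "semi_valid n l C"
  shows "(\<exists>i. consecutive n C i (2*l+1)) \<longleftrightarrow> arc n (2*l+1) (set C)"
proof -
  obtain v \<sigma> where mono: "\<forall>s t. s < t \<longrightarrow> t < 2*l+1 \<longrightarrow> v s < v t" and vn: "\<forall>s<2*l+1. v s < n"
    and setC: "set C = v ` {..<2*l+1}"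
    and \<sigma>: "\<forall>p. \<sigma> p < 2*l+1 \<and> wi C p = v (\<sigma> p)"
    and \<sigma>add: "\<forall>p s. \<sigma> (p + 2 * int s) = (\<sigma> p + s) mod (2*l+1)"
    and surj: "\<forall>a<2*l+1. \<exists>p. 1 \<le> p \<and> p \<le> int (2*l+1) \<and> \<sigma> p = a"
    using sv_struct[OF sv] by blast
  define M where "M = 2*l+1"
  have Mn: "M \<le> n" using sv_count(2,3)[OF sv, of 2] card_mono[of "{..<n}" "set C"] unfolding M_def by simp
  have n0: "0 < n" using Mn unfolding M_def by simp
  show ?thesis
  proof
    assume "\<exists>i. consecutive n C i (2*l+1)"
    then obtain i j where ij: "\<forall>s<M. wi C (i + 2 * int s) = (j + s) mod n"
      unfolding consecutive_def M_def by blast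
    have wis: "wi C (i + 2 * int s) = v ((\<sigma> i + s) mod M)" for s
    proof -
      have "wi C (i + 2 * int s) = v (\<sigma> (i + 2 * int s))" using \<sigma> by blast
      then show ?thesis using \<sigma>add unfolding M_def by simp
    qed
    have "set C = {(j + s) mod n | s. s < M}"
    proof
      show "set C \<subseteq> {(j + s) mod n | s. s < M}"
      proof
        fix x assume "x \<in> set C"
        then obtain t where t: "t < M" "x = v t" using setC unfolding M_def by auto
        define s where "s = (t + (M - \<sigma> i)) mod M"
        have "(\<sigma> i + s) mod M = (\<sigma> i + (t + (M - \<sigma> i))) mod M" unfolding s_def by (simp add: mod_add_right_eq)
        also have "\<sigma> i + (t + (M - \<sigma> i)) = t + M"
        proof -
          have "\<sigma> i < M" using \<sigma> unfolding M_def by blast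
          then show ?thesis by simp
        qed
        also have "(t + M) mod M = t" using t by simp
        finally have "(\<sigma> i + s) mod M = t" .
        moreover have "s < M" unfolding s_def M_def by simp
        ultimately have "x = (j + s) mod n" using ij wis[of s] t \<open>(\<sigma> i + s) mod M = t\<close> by simp
        then show "x \<in> {(j + s) mod n | s. s < M}" using \<open>s < M\<close> by blast
      qed
      show "{(j + s) mod n | s. s < M} \<subseteq> set C"
      proof
        fix x assume "x \<in> {(j + s) mod n | s. s < M}"
        then obtain s where s: "s < M" "x = (j + s) mod n" by auto
        then have "x = v ((\<sigma> i + s) mod M)" using ij wis[of s] by simp
        moreover have "(\<sigma> i + s) mod M < M" unfolding M_def by simp
        ultimately show "x \<in> set C" using setC unfolding M_def by auto
      qed
    qed
    then show "arc n (2*l+1) (set C)" unfolding arc_def M_def by blast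
  next
    assume "arc n (2*l+1) (set C)"
    then obtain j where j: "set C = {(j + s) mod n | s. s < M}" unfolding arc_def M_def by blast
    define j' where "j' = j mod n"
    have j'n: "j' < n" unfolding j'_def using n0 by simp
    have jj: "(j + s) mod n = (j' + s) mod n" for s unfolding j'_def by (simp add: mod_add_left_eq)
    define c where "c = n - j'"
    define q where "q = card {s. s < M \<and> v s + c < n}"
    define g where "g s = (v ((q + s) mod M) + c) mod n" for s
    have offc: "off n j' x = (x + c) mod n" for x unfolding off_def c_def using j'n by simp
    have gmono: "\<And>s t. s < t \<Longrightarrow> t < M \<Longrightarrow> g s < g t"
      unfolding g_def M_def using cyc_incr[of "2*l+1" v n c q] mono vn q_def c_def M_def by simp
    have gbd: "g s < M" for s
    proof -
      have "v ((q + s) mod M) \<in> set C" using setC unfolding M_def by simp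
      then obtain s' where s': "s' < M" "v ((q + s) mod M) = (j' + s') mod n" using j jj by auto
      then have "off n j' (v ((q + s) mod M)) = s'" using off_add[OF j'n, of s'] Mn by simp
      then show ?thesis using s' offc unfolding g_def by simp
    qed
    have vq: "v ((q + s) mod M) = (j' + s) mod n" if s: "s < M" for s
    proof -
      have "g s = s" using mono_id[of M g s, OF gmono gbd s] by simp
      then have "off n j' (v ((q + s) mod M)) = s" using offc unfolding g_def by simp
      moreover have "v ((q + s) mod M) < n" using vn unfolding M_def by simp
      ultimately show ?thesis using off_inv[OF j'n, of "v ((q + s) mod M)"] by simp
    qed
    have "q mod M < M" unfolding M_def by simp
    then obtain p where p: "\<sigma> p = q mod M" using surj unfolding M_def by blast
    have "wi C (p + 2 * int s) = (j + s) mod n" if "s < M" for s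
    proof -
      have "wi C (p + 2 * int s) = v (\<sigma> (p + 2 * int s))" using \<sigma> by blast
      then have "wi C (p + 2 * int s) = v ((\<sigma> p + s) mod M)" using \<sigma>add unfolding M_def by simp
      also have "(\<sigma> p + s) mod M = (q + s) mod M" using p by (simp add: mod_add_left_eq)
      finally show ?thesis using vq[OF that] jj by simp
    qed
    then show "\<exists>i. consecutive n C i (2*l+1)" unfolding consecutive_def M_def by blast
  qed
qed

lemma C0_sv:
  assumes Mn: "2*l+1 \<le> n"
  shows "semi_valid n l (map (\<lambda>i. (i*(l+1)) mod (2*l+1)) [0..<2*l+1])"
    and "set (map (\<lambda>i. (i*(l+1)) mod (2*l+1)) [0..<2*l+1]) = {..<2*l+1}"
proof -
  define M where "M = 2*l+1"
  define C0 where "C0 = map (\<lambda>i. (i*(l+1)) mod M) [0..<M]"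
  define L0 where "L0 = map (\<lambda>s. wi C0 (2*int s + 1)) [0..<l+1] @ map (\<lambda>s. wi C0 (2*int s + 2)) [0..<l]"
  have lenM: "length C0 = M" unfolding C0_def by (simp only: length_map length_upt, (simp)?)
  have len: "length C0 = 2*l+1" using lenM M_def by simp
  have C0nth: "C0 ! i = (i*(l+1)) mod M" if "i < M" for i
    unfolding C0_def using that by (simp only: nth_map length_upt nth_upt, (simp)?)
  have L0C: "L0 ! s = C0 ! ((2*s) mod M)" if s: "s < M" for s
  proof -
    have "s < 2*l+1" using s M_def by simp
    then have "L0 ! s = C0 ! ((2*s) mod (2*l+1))" unfolding L0_def by (rule L_nth[OF len])
    then show ?thesis using M_def by simp
  qed
  have Lnth: "L0 ! s = s" if s: "s < M" for s
  proof -
    have m0: "0 < M" using s by simp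
    have "L0 ! s = C0 ! ((2*s) mod M)" using L0C[OF s] .
    also have "\<dots> = (((2*s) mod M) * (l+1)) mod M" using C0nth m0 by simp
    also have "\<dots> = ((2*s) * (l+1)) mod M" by (rule mod_mult_left_eq)
    also have "(2*s) * (l+1) = s + s * M" unfolding M_def by (simp add: algebra_simps)
    also have "(s + s * M) mod M = s" using s by simp
    finally show ?thesis .
  qed
  have lenL: "length L0 = M" unfolding L0_def M_def by (simp only: length_append length_map length_upt, (simp)?)
  have L0eq: "L0 = [0..<M]"
  proof (rule nth_equalityI)
    show "length L0 = length [0..<M]" using lenL by simp
    fix i assume "i < length L0"
    then show "L0 ! i = [0..<M] ! i" using Lnth lenL by simp
  qed
  have setC0: "set C0 = {..<M}"
  proof
    show "set C0 \<subseteq> {..<M}"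
    proof
      fix x assume "x \<in> set C0"
      then obtain i where "i < length C0" "x = C0 ! i" by (metis in_set_conv_nth)
      then show "x \<in> {..<M}" using C0nth lenM by simp
    qed
    show "{..<M} \<subseteq> set C0"
    proof
      fix s assume "s \<in> {..<M}"
      then have s: "s < M" by simp
      have "s = C0 ! ((2*s) mod M)" using Lnth[OF s] L0C[OF s] by simp
      moreover have "(2*s) mod M < length C0" using lenM s by simp
      ultimately show "s \<in> set C0" using nth_mem by metis
    qed
  qed
  have d: "distinct C0" using setC0 lenM by (intro card_distinct) simp
  have c: "cyc_ordered L0" unfolding cyc_ordered_def L0eq by (rule exI[of _ 0]) simp
  have ss: "set C0 \<subseteq> {0..<n}"
  proof
    fix x assume "x \<in> set C0"
    then have "x < M" using setC0 by blast
    then show "x \<in> {0..<n}" using Mn M_def by simp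
  qed
  have "semi_valid n l C0"
    unfolding semi_valid_def L0_def[symmetric] by (intro conjI len d ss c)
  then show "semi_valid n l (map (\<lambda>i. (i*(l+1)) mod (2*l+1)) [0..<2*l+1])"
    unfolding C0_def M_def .
  show "set (map (\<lambda>i. (i*(l+1)) mod (2*l+1)) [0..<2*l+1]) = {..<2*l+1}" using setC0 unfolding C0_def M_def .
qed



theorem corollary3p9:
  fixes n r l :: nat and C :: "nat list"
  assumes "r \<ge> 3" and "l \<ge> 1" and "n \<ge> 3*r - 4" and "n \<ge> 2*l + 1"
    and "semi_valid n l C"
  shows "card (H n r C) = (LEAST m. \<exists>C'. semi_valid n l C' \<and> m = card (H n r C'))
         \<longleftrightarrow> (\<exists>i. consecutive n C i (2*l+1))"
proof -
  have r: "3 \<le> r" and l: "1 \<le> l" and rn: "3*r - 4 \<le> n" and Mn: "2*l+1 \<le> n" and sv: "semi_valid n l C"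
    using assms by auto
  have r2: "2 \<le> r" using r by simp
  define C0 where "C0 = map (\<lambda>i. (i*(l+1)) mod (2*l+1)) [0..<2*l+1]"
  have sv0: "semi_valid n l C0" unfolding C0_def using C0_sv(1)[OF Mn] .
  have set0: "set C0 = {..<2*l+1}" unfolding C0_def using C0_sv(2)[OF Mn] .
  define B where "B = {..<2*l+1}"
  have Bsub: "B \<subseteq> {..<n}" unfolding B_def using Mn by auto
  have Bcard: "card B = 2*l+1" unfolding B_def by simp
  have Barc: "arc n (2*l+1) B"
  proof -
    have "{(0 + s) mod n | s. s < 2*l+1} = B"
    proof
      show "{(0 + s) mod n | s. s < 2*l+1} \<subseteq> B" unfolding B_def using Mn by auto
      show "B \<subseteq> {(0 + s) mod n | s. s < 2*l+1}"
      proof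
        fix x assume "x \<in> B"
        then have x: "x < 2*l+1" unfolding B_def by simp
        then have "x = (0 + x) mod n" using Mn by simp
        then show "x \<in> {(0 + s) mod n | s. s < 2*l+1}" using x by blast
      qed
    qed
    then show ?thesis unfolding arc_def by metis
  qed
  have cnt_eq: "card (H n r C') + Nsum n r (set C') = n choose r" if "semi_valid n l C'" for C'
    using sv_count(1)[OF that r2] .
  have ge0: "card (H n r C0) \<le> card (H n r C')" if svc: "semi_valid n l C'" for C'
  proof -
    have "Nsum n r (set C') \<le> Nsum n r B"
      using Nsum_compare(1)[OF sv_count(2,3)[OF svc r2] Bsub Bcard Barc r l] .
    moreover have "Nsum n r (set C0) = Nsum n r B" using set0 unfolding B_def by simp
    ultimately show ?thesis using cnt_eq[OF svc] cnt_eq[OF sv0] by linarith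
  qed
  have mu: "(LEAST m. \<exists>C'. semi_valid n l C' \<and> m = card (H n r C')) = card (H n r C0)"
  proof (rule Least_equality)
    show "\<exists>C'. semi_valid n l C' \<and> card (H n r C0) = card (H n r C')" using sv0 by blast
    fix y assume "\<exists>C'. semi_valid n l C' \<and> y = card (H n r C')"
    then show "card (H n r C0) \<le> y" using ge0 by blast
  qed
  have N0: "Nsum n r (set C0) = Nsum n r B" using set0 unfolding B_def by simp
  have WC: "set C \<subseteq> {..<n}" "card (set C) = 2*l+1" using sv_count(2,3)[OF sv r2] by auto
  have "card (H n r C) = card (H n r C0) \<longleftrightarrow> arc n (2*l+1) (set C)"
  proof
    assume eq: "card (H n r C) = card (H n r C0)"
    show "arc n (2*l+1) (set C)"
    proof (rule ccontr)
      assume na: "\<not> arc n (2*l+1) (set C)"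
      have "Nsum n r (set C) < Nsum n r B"
        using Nsum_compare(2)[OF WC Bsub Bcard Barc r l na rn] .
      then show False using eq cnt_eq[OF sv] cnt_eq[OF sv0] N0 by linarith
    qed
  next
    assume a: "arc n (2*l+1) (set C)"
    have "Nsum n r (set C) \<le> Nsum n r B" using Nsum_compare(1)[OF WC Bsub Bcard Barc r l] .
    moreover have "Nsum n r B \<le> Nsum n r (set C)" using Nsum_compare(1)[OF Bsub Bcard WC a r l] .
    ultimately show "card (H n r C) = card (H n r C0)"
      using cnt_eq[OF sv] cnt_eq[OF sv0] N0 by linarith
  qed
  then show ?thesis unfolding mu using consec_iff[OF sv] by simp
qed


end
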